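(* Let $\nu_n(x_0,x_1)$ ($n\ge 0$) be any nonvanishing functions and $\bar P_n(x;x_0,x_1)=\nu_n(x_0,x_1)P_n(x;x_0,x_1)$. Then for all $n\ge1$: $$\mathcal{A}_6\bar P_n=\frac{1}{(1-x_0^2)(1-x_1^2)}\Bigg\{\frac{\nu_n(q^{-\frac12}x_0,q^{-\frac12}x_1)}{\nu_{n+1}(x_0,x_1)}q^{-n-\frac52}\left(x_0^2x_1^2-q^{n+2}\right)^2\bar P_{n+1}$$ $$-q^{-n-\frac32}\left(\frac{\nu_n(q^{\frac12}x_0,q^{-\frac12}x_1)}{\nu_n(x_0,x_1)}(x_1^2-q^{n+1})^2+\frac{\nu_n(q^{-\frac12}x_0,q^{\frac12}x_1)}{\nu_n(x_0,x_1)}(x_0^2-q^{n+1})^2\right)\bar P_n+\frac{\nu_n(q^{\frac12}x_0,q^{\frac12}x_1)}{\nu_{n-1}(x_0,x_1)}q^{-n-\frac12}(1-q^n)^2\bar P_{n-1}\Bigg\},$$ where on the right-hand side $\bar P_m=\bar P_m(x;x_0,x_1)$.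
   Context: Let $q$ be a complex parameter with $0<|q|<1$, with a fixed choice of $q^{1/4}$ and $q^{k/4}:=(q^{1/4})^k$; $x,x_0,x_1$ are variables. Notation: $(y)_n=(y;q)_n=\prod_{i=1}^{n}(1-yq^{i-1})$, $(y_1,\dots,y_k)_n=(y_1)_n\cdots(y_k)_n$. Operators on functions $f(x,x_0,x_1)$: $\eth f(x,x_0,x_1)=f(q^{1/2}x,x_0,x_1)$, $\eth_0 f(x,x_0,x_1)=f(x,q^{1/2}x_0,x_1)$, $\eth_1 f(x,x_0,x_1)=f(x,x_0,q^{1/2}x_1)$, with powers and inverses defined accordingly; a function written to the left of an operator acts by multiplication after the operator is applied, and products of operators denote composition. For $n\ge0$, $$P_n(x;x_0,x_1)=(-1)^nq^{-\frac n2}\frac{\left(q,\frac{q}{x_0^2},\frac{q}{x_1^2}\right)_n}{\left(\frac{q^{n+1}}{x_0^2x_1^2}\right)_n}\sum_{k=0}^{n}q^k\frac{\left(q^{-n},\frac{q^{n+1}}{x_0^2x_1^2}\right)_k}{\left(q,q,\frac{q}{x_0^2},\frac{q}{x_1^2}\right)_k}\left(-q^{\frac12}x,-q^{\frac12}x^{-1}\right)_k$$ (the Askey–Wilson polynomial with parameters $(a,b,c,d)=(-q^{1/2},-q^{1/2},-q^{1/2}/x_0^2,-q^{1/2}/x_1^2)$). Let $\omega(x)=\frac{x(1+q^{1/2}x)}{q^{1/2}(1-x^2)(1-q^{1/2}x)}$ and, for $b\in\{0,1\}$, $$K_0(x_b;x)=-\frac{1}{1-x_b^2}\eth_b+\frac{(q^{\frac12}x+x_b^2)(q^{\frac32}x+x_b^2)}{q\,x(1-x_b^2)}\eth_b^{-1},\qquad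 G_0(x_b;x)=-\frac{1}{1-x_b^2}\eth_b+\frac{(q^{\frac12}x+x_b^2)(q^{\frac12}+x\,x_b^2)}{q^{\frac12}x(1-x_b^2)}\eth_b^{-1}.$$ Define (image of the curve $\mathbb{k}_6$ of the genus-two skein algebra) $$\mathcal{A}_6=\sum_{\epsilon=\pm1}\omega(x^\epsilon)\left\{K_0(x_0;x^\epsilon)\,K_0(x_1;x^\epsilon)\,\eth^{2\epsilon}-G_0(x_0;x)\,G_0(x_1;x)\right\}.$$ *)

theory Defs
  imports Complex_Main
begin

text \<open>Conventions: q is a complex parameter, r is the fixed choice of q^(1/4) (so r^4 = q),
  hence q^(1/2) = r^2 and q^(k/4) = r^k. Functions f(x,x0,x1) are curried complex functions.\<close>

type_synonym cfun3 = "complex \<Rightarrow> complex \<Rightarrow> complex \<Rightarrow> complex"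

definition qpoch :: "complex \<Rightarrow> complex \<Rightarrow> nat \<Rightarrow> complex" where
  "qpoch q y n = (\<Prod>i<n. 1 - y * q ^ i)"

definition Pn :: "complex \<Rightarrow> complex \<Rightarrow> nat \<Rightarrow> cfun3" where
  "Pn q r n x x0 x1 =
     (-1) ^ n / (r^2) ^ n
     * (qpoch q q n * qpoch q (q / x0^2) n * qpoch q (q / x1^2) n)
       / qpoch q (q^(n+1) / (x0^2 * x1^2)) n
     * (\<Sum>k\<le>n. q ^ k
          * (qpoch q (1 / q^n) k * qpoch q (q^(n+1) / (x0^2 * x1^2)) k)
          / (qpoch q q k * qpoch q q k * qpoch q (q / x0^2) k * qpoch q (q / x1^2) k)
          * (qpoch q (- (r^2) * x) k * qpoch q (- (r^2) / x) k))"

definition Pbar :: "(nat \<Rightarrow> complex \<Rightarrow> complex \<Rightarrow> complex) \<Rightarrow> complex \<Rightarrow> complex \<Rightarrow> nat \<Rightarrow> cfun3" where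
  "Pbar nu q r n x x0 x1 = nu n x0 x1 * Pn q r n x x0 x1"

definition eth :: "complex \<Rightarrow> int \<Rightarrow> cfun3 \<Rightarrow> cfun3" where
  "eth r k f = (\<lambda>x x0 x1. f ((r^2) powi k * x) x0 x1)"

definition ethb :: "complex \<Rightarrow> nat \<Rightarrow> int \<Rightarrow> cfun3 \<Rightarrow> cfun3" where
  "ethb r b k f = (if b = 0 then (\<lambda>x x0 x1. f x ((r^2) powi k * x0) x1)
                             else (\<lambda>x x0 x1. f x x0 ((r^2) powi k * x1)))"

definition omega :: "complex \<Rightarrow> complex \<Rightarrow> complex" where
  "omega r y = y * (1 + r^2 * y) / (r^2 * (1 - y^2) * (1 - r^2 * y))"

text \<open>K_0(x_b; x^e) as an operator (coefficients evaluated at the current point).\<close>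
definition K0 :: "complex \<Rightarrow> nat \<Rightarrow> int \<Rightarrow> cfun3 \<Rightarrow> cfun3" where
  "K0 r b e f = (\<lambda>x x0 x1.
     (let xb = (if b = 0 then x0 else x1); y = x powi e in
       - (1 / (1 - xb^2)) * ethb r b 1 f x x0 x1
       + ((r^2 * y + xb^2) * (r^6 * y + xb^2)) / (r^4 * y * (1 - xb^2)) * ethb r b (-1) f x x0 x1))"

definition G0 :: "complex \<Rightarrow> nat \<Rightarrow> cfun3 \<Rightarrow> cfun3" where
  "G0 r b f = (\<lambda>x x0 x1.
     (let xb = (if b = 0 then x0 else x1) in
       - (1 / (1 - xb^2)) * ethb r b 1 f x x0 x1
       + ((r^2 * x + xb^2) * (r^2 + x * xb^2)) / (r^2 * x * (1 - xb^2)) * ethb r b (-1) f x x0 x1))"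

definition A6 :: "complex \<Rightarrow> cfun3 \<Rightarrow> cfun3" where
  "A6 r f = (\<lambda>x x0 x1. \<Sum>e\<in>{1, -1::int}.
      omega r (x powi e) * (K0 r 0 e (K0 r 1 e (eth r (2 * e) f)) x x0 x1
                            - G0 r 0 (G0 r 1 f) x x0 x1))"

text \<open>Genericity of the point (x,x0,x1): all denominators occurring in the identity
  (in omega, K_0, G_0 and in P_m, 0 \<le> m \<le> n+1, at all shifted points) are nonzero.\<close>
definition generic_point :: "complex \<Rightarrow> complex \<Rightarrow> nat \<Rightarrow> complex \<Rightarrow> complex \<Rightarrow> complex \<Rightarrow> bool" where
  "generic_point q r n x x0 x1 \<longleftrightarrow>
     x \<noteq> 0 \<and> x0 \<noteq> 0 \<and> x1 \<noteq> 0 \<and> x^2 \<noteq> 1 \<and> 1 - r^2 * x \<noteq> 0 \<and> 1 - r^2 / x \<noteq> 0 \<and>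
     x0^2 \<noteq> 1 \<and> x1^2 \<noteq> 1 \<and>
     (\<forall>a\<in>{1 / r^2, 1, r^2}. \<forall>b\<in>{1 / r^2, 1, r^2}. \<forall>m\<le>n+1.
        qpoch q (q^(m+1) / ((a * x0)^2 * (b * x1)^2)) m \<noteq> 0 \<and>
        qpoch q (q / (a * x0)^2) m \<noteq> 0 \<and> qpoch q (q / (b * x1)^2) m \<noteq> 0)"

end

theory Submission
  imports Defs
begin

lemma qpoch_0[simp]: "qpoch q y 0 = 1" by (simp add: qpoch_def)
lemma qpoch_Suc: "qpoch q y (Suc k) = qpoch q y k * (1 - y*q^k)"
  by (simp add: qpoch_def)
lemma qpoch_Suc_left: "y' = q*y \<Longrightarrow> qpoch q y (Suc k) = (1 - y) * qpoch q y' k"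
proof (induction k)
  case 0 then show ?case by (simp add: qpoch_def)
next
  case (Suc k)
  have "qpoch q y (Suc (Suc k)) = qpoch q y (Suc k) * (1 - y*q^(Suc k))" by (rule qpoch_Suc)
  also have "\<dots> = (1 - y) * (qpoch q y' k * (1 - y' * q^k))" using Suc by (simp add: power_Suc mult_ac)
  also have "\<dots> = (1-y) * qpoch q y' (Suc k)" by (simp add: qpoch_Suc)
  finally show ?case .
qed
lemma qpoch_nz_le: "qpoch q y m \<noteq> 0 \<Longrightarrow> k \<le> m \<Longrightarrow> qpoch q y k \<noteq> 0"
proof (induction m)
  case 0 then show ?case by simp
next
  case (Suc m) then show ?case by (cases "k = Suc m") (auto simp: qpoch_Suc)
qed
lemma qpoch_nz_fac: "qpoch q y m \<noteq> 0 \<Longrightarrow> k < m \<Longrightarrow> 1 - y*q^k \<noteq> 0"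
proof (induction m)
  case 0 then show ?case by simp
next
  case (Suc m) then show ?case by (cases "k = m") (auto simp: qpoch_Suc)
qed
lemma qpoch_zero_ge:
  assumes "q \<noteq> 0" "n < k" shows "qpoch q (1/q^n) k = 0"
proof -
  have "q^n \<noteq> 0" using assms(1) by simp
  then have "(1 - 1/q^n * q^n) = 0" by simp
  then have "\<exists>i\<in>{..<k}. 1 - 1/q^n * q^i = 0" using assms(2) by (intro bexI[of _ n]) simp_all
  then show ?thesis unfolding qpoch_def by (intro prod_zero) auto
qed

definition phi :: "complex \<Rightarrow> complex \<Rightarrow> nat \<Rightarrow> complex \<Rightarrow> complex" where
  "phi q s k x = qpoch q (-s*x) k * qpoch q (-s/x) k"
definition cf :: "complex \<Rightarrow> complex \<Rightarrow> complex \<Rightarrow> complex \<Rightarrow> nat \<Rightarrow> complex" where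
  "cf q N A B k = q ^ k * (qpoch q (1/N) k * qpoch q (q*N/(A*B)) k)
       / (qpoch q q k * qpoch q q k * qpoch q (q/A) k * qpoch q (q/B) k)"
definition pre :: "complex \<Rightarrow> complex \<Rightarrow> nat \<Rightarrow> complex \<Rightarrow> complex \<Rightarrow> complex" where
  "pre q s n A B = (-1)^n / s^n * (qpoch q q n * qpoch q (q/A) n * qpoch q (q/B) n)
       / qpoch q (q^(n+1)/(A*B)) n"
definition PAB :: "complex \<Rightarrow> complex \<Rightarrow> nat \<Rightarrow> complex \<Rightarrow> complex \<Rightarrow> complex \<Rightarrow> complex" where
  "PAB q s n x A B = pre q s n A B * (\<Sum>k\<le>n. cf q (q^n) A B k * phi q s k x)"

lemma Pn_PAB: "Pn q r n x x0 x1 = PAB q (r^2) n x (x0^2) (x1^2)"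
  unfolding Pn_def PAB_def pre_def cf_def phi_def
  by (simp add: sum_distrib_left mult_ac)

lemma phi_Suc: "phi q s (Suc k) x = phi q s k x * ((1 + s*q^k*x) * (1 + s*q^k/x))"
  unfolding phi_def by (simp add: qpoch_Suc algebra_simps)

lemma phi_sym: "phi q s k (1/x) = phi q s k x"
  unfolding phi_def by (simp add: mult_ac)

lemma phi_up:
  assumes "s^2 = q" "x \<noteq> 0" "s \<noteq> 0"
  shows "phi q s (Suc j) (q*x) * (s*x) = phi q s j x * ((1 + s*q^j*x) * (1 + s*q^(Suc j)*x))"
proof (induction j)
  case 0
  have qs: "q = s*s" using assms(1) by (simp add: power2_eq_square)
  show ?case unfolding phi_def using assms(2,3)
    by (simp add: qpoch_Suc field_simps qs)
next
  case (Suc j)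
  have "phi q s (Suc (Suc j)) (q*x) * (s*x) = phi q s (Suc j) (q*x) * (s*x) * ((1 + s*q^(Suc j)*(q*x)) * (1 + s*q^(Suc j)/(q*x)))"
    by (simp add: phi_Suc mult_ac)
  also have "\<dots> = phi q s j x * ((1 + s*q^j*x) * (1 + s*q^(Suc j)*x)) * ((1 + s*q^(Suc j)*(q*x)) * (1 + s*q^(Suc j)/(q*x)))"
    using Suc by simp
  also have "\<dots> = phi q s (Suc j) x * ((1 + s*q^(Suc j)*x) * (1 + s*q^(Suc (Suc j))*x))"
  proof -
    have "q \<noteq> 0" using assms by auto
    then have "s*q^(Suc j)/(q*x) = s*q^j/x" by (simp add: field_simps)
    then show ?thesis by (simp add: phi_Suc mult_ac)
  qed
  finally show ?case .
qed

lemma phi_down: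
  assumes "s^2 = q" "x \<noteq> 0" "s \<noteq> 0"
  shows "phi q s (Suc j) (x/q) * s = phi q s j x * ((x + s*q^j) * (1 + s*q^(Suc j)/x))"
proof -
  have q0: "q \<noteq> 0" using assms by auto
  have "phi q s (Suc j) (x/q) = phi q s (Suc j) (q*(1/x))"
    using phi_sym[of q s "Suc j" "x/q"] q0 by (simp add: field_simps)
  then have "phi q s (Suc j) (x/q) * (s*(1/x)) = phi q s j (1/x) * ((1 + s*q^j*(1/x)) * (1 + s*q^(Suc j)*(1/x)))"
    using phi_up[of s q "1/x" j] assms by simp
  then show ?thesis using assms(2) unfolding phi_sym by (simp add: field_simps)
qed

definition om :: "complex \<Rightarrow> complex \<Rightarrow> complex" where
  "om s y = y*(1+s*y)/(s*(1-y^2)*(1-s*y))"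
definition kc :: "complex \<Rightarrow> bool \<Rightarrow> complex \<Rightarrow> complex \<Rightarrow> complex" where
  "kc s a A y = (if a then - (1/(1-A)) else (s*y+A)*(s^3*y+A)/(s^2*y*(1-A)))"
definition gc :: "complex \<Rightarrow> bool \<Rightarrow> complex \<Rightarrow> complex \<Rightarrow> complex" where
  "gc s a A x = (if a then - (1/(1-A)) else (s*x+A)*(s+x*A)/(s*x*(1-A)))"
definition Dop :: "complex \<Rightarrow> complex \<Rightarrow> bool \<Rightarrow> bool \<Rightarrow> complex \<Rightarrow> complex \<Rightarrow> (complex \<Rightarrow> complex) \<Rightarrow> complex \<Rightarrow> complex" where
  "Dop q s a b A B f x = om s x * kc s a A x * kc s b B x * f (q*x)
     + om s (1/x) * kc s a A (1/x) * kc s b B (1/x) * f (x/q)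
     - (om s x + om s (1/x)) * (gc s a A x * gc s b B x) * f x"
definition sh :: "complex \<Rightarrow> bool \<Rightarrow> complex \<Rightarrow> complex" where
  "sh s a y = (if a then s*y else y/s)"

lemma K0_0: "K0 r 0 e f x x0 x1 = kc (r^2) True (x0^2) (x powi e) * f x (r^2*x0) x1
     + kc (r^2) False (x0^2) (x powi e) * f x (x0/r^2) x1"
  by (simp add: K0_def kc_def ethb_def Let_def power_int_minus divide_inverse mult_ac power_mult[symmetric])
lemma K0_1: "K0 r 1 e f x x0 x1 = kc (r^2) True (x1^2) (x powi e) * f x x0 (r^2*x1)
     + kc (r^2) False (x1^2) (x powi e) * f x x0 (x1/r^2)"
  by (simp add: K0_def kc_def ethb_def Let_def power_int_minus divide_inverse mult_ac power_mult[symmetric])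
lemma G0_0: "G0 r 0 f x x0 x1 = gc (r^2) True (x0^2) x * f x (r^2*x0) x1
     + gc (r^2) False (x0^2) x * f x (x0/r^2) x1"
  by (simp add: G0_def gc_def ethb_def Let_def power_int_minus divide_inverse mult_ac)
lemma G0_1: "G0 r 1 f x x0 x1 = gc (r^2) True (x1^2) x * f x x0 (r^2*x1)
     + gc (r^2) False (x1^2) x * f x x0 (x1/r^2)"
  by (simp add: G0_def gc_def ethb_def Let_def power_int_minus divide_inverse mult_ac)
lemma omega_om: "omega r y = om (r^2) y" by (simp add: omega_def om_def)

lemma sum_pm: "(\<Sum>e\<in>{1, -1::int}. f e) = f 1 + f (-1)" by simp

lemma A6_expand:
  fixes r q :: complex
  assumes "r^4 = q"
  shows "A6 r F x x0 x1 =
      Dop q (r^2) True True (x0^2) (x1^2) (\<lambda>z. F z (sh (r^2) True x0) (sh (r^2) True x1)) x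
    + Dop q (r^2) True False (x0^2) (x1^2) (\<lambda>z. F z (sh (r^2) True x0) (sh (r^2) False x1)) x
    + Dop q (r^2) False True (x0^2) (x1^2) (\<lambda>z. F z (sh (r^2) False x0) (sh (r^2) True x1)) x
    + Dop q (r^2) False False (x0^2) (x1^2) (\<lambda>z. F z (sh (r^2) False x0) (sh (r^2) False x1)) x"
proof -
  have e: "{1, -1::int} = insert 1 {-1}" by simp
  have p1: "(r^2) powi 2 = q" "(r^2) powi (-2) = inverse q" using assms(1)
    by (simp_all add: power_int_minus power_mult[symmetric])
  have x1: "x powi 1 = x" "x powi (-1) = 1/x" by (simp_all add: power_int_minus divide_inverse)
  have et: "eth r (2*1) g = (\<lambda>x x0 x1. g (q*x) x0 x1)" "eth r (2*(-1)) g = (\<lambda>x x0 x1. g (x/q) x0 x1)" for g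
    using p1 by (simp_all add: eth_def divide_inverse mult_ac)
  have "A6 r F x x0 x1 = (\<Sum>e\<in>{1, -1::int}.
      omega r (x powi e) * (K0 r 0 e (K0 r 1 e (eth r (2 * e) F)) x x0 x1
                            - G0 r 0 (G0 r 1 F) x x0 x1))" by (simp add: A6_def)
  also have "\<dots> = om (r^2) x * (K0 r 0 1 (K0 r 1 1 (eth r (2 * 1) F)) x x0 x1 - G0 r 0 (G0 r 1 F) x x0 x1)
     + om (r^2) (1/x) * (K0 r 0 (-1) (K0 r 1 (-1) (eth r (2 * (-1)) F)) x x0 x1 - G0 r 0 (G0 r 1 F) x x0 x1)"
    by (simp only: sum_pm omega_om x1)
  also have "\<dots> = om (r^2) x * (
      kc (r^2) True (x0^2) x * (kc (r^2) True (x1^2) x * F (q*x) (r^2*x0) (r^2*x1) + kc (r^2) False (x1^2) x * F (q*x) (r^2*x0) (x1/r^2))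
    + kc (r^2) False (x0^2) x * (kc (r^2) True (x1^2) x * F (q*x) (x0/r^2) (r^2*x1) + kc (r^2) False (x1^2) x * F (q*x) (x0/r^2) (x1/r^2))
    - (gc (r^2) True (x0^2) x * (gc (r^2) True (x1^2) x * F x (r^2*x0) (r^2*x1) + gc (r^2) False (x1^2) x * F x (r^2*x0) (x1/r^2))
     + gc (r^2) False (x0^2) x * (gc (r^2) True (x1^2) x * F x (x0/r^2) (r^2*x1) + gc (r^2) False (x1^2) x * F x (x0/r^2) (x1/r^2))))
    + om (r^2) (1/x) * (
      kc (r^2) True (x0^2) (1/x) * (kc (r^2) True (x1^2) (1/x) * F (x/q) (r^2*x0) (r^2*x1) + kc (r^2) False (x1^2) (1/x) * F (x/q) (r^2*x0) (x1/r^2))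
    + kc (r^2) False (x0^2) (1/x) * (kc (r^2) True (x1^2) (1/x) * F (x/q) (x0/r^2) (r^2*x1) + kc (r^2) False (x1^2) (1/x) * F (x/q) (x0/r^2) (x1/r^2))
    - (gc (r^2) True (x0^2) x * (gc (r^2) True (x1^2) x * F x (r^2*x0) (r^2*x1) + gc (r^2) False (x1^2) x * F x (r^2*x0) (x1/r^2))
     + gc (r^2) False (x0^2) x * (gc (r^2) True (x1^2) x * F x (x0/r^2) (r^2*x1) + gc (r^2) False (x1^2) x * F x (x0/r^2) (x1/r^2))))"
    by (simp only: K0_0 K0_1 G0_0 G0_1 et x1)
  also have "\<dots> = Dop q (r^2) True True (x0^2) (x1^2) (\<lambda>z. F z (sh (r^2) True x0) (sh (r^2) True x1)) x
    + Dop q (r^2) True False (x0^2) (x1^2) (\<lambda>z. F z (sh (r^2) True x0) (sh (r^2) False x1)) x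
    + Dop q (r^2) False True (x0^2) (x1^2) (\<lambda>z. F z (sh (r^2) False x0) (sh (r^2) True x1)) x
    + Dop q (r^2) False False (x0^2) (x1^2) (\<lambda>z. F z (sh (r^2) False x0) (sh (r^2) False x1)) x"
    unfolding Dop_def sh_def by (simp only: if_True if_False) algebra
  finally show ?thesis .
qed

definition kp :: "complex \<Rightarrow> bool \<Rightarrow> complex \<Rightarrow> complex \<Rightarrow> complex" where
  "kp s a A x = (if a then -(s^2*x) else (s*x+A)*(s^3*x+A))"
definition kt :: "complex \<Rightarrow> bool \<Rightarrow> complex \<Rightarrow> complex \<Rightarrow> complex" where
  "kt s a A x = (if a then -(s^2*x) else (s+A*x)*(s^3+A*x))"
definition hp :: "complex \<Rightarrow> bool \<Rightarrow> complex \<Rightarrow> complex \<Rightarrow> complex" where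
  "hp s a A x = (if a then -(s*x) else (s*x+A)*(s+x*A))"

lemma kc_kp: "x \<noteq> 0 \<Longrightarrow> s \<noteq> 0 \<Longrightarrow> A \<noteq> 1 \<Longrightarrow> kc s a A x = kp s a A x/(s^2*x*(1-A))"
  by (cases a) (simp_all add: kc_def kp_def field_simps)
lemma kc_kt: "x \<noteq> 0 \<Longrightarrow> s \<noteq> 0 \<Longrightarrow> A \<noteq> 1 \<Longrightarrow> kc s a A (1/x) = kt s a A x/(s^2*x*(1-A))"
  by (cases a) (simp_all add: kc_def kt_def field_simps power3_eq_cube)
lemma gc_hp: "x \<noteq> 0 \<Longrightarrow> s \<noteq> 0 \<Longrightarrow> A \<noteq> 1 \<Longrightarrow> gc s a A x = hp s a A x/(s*x*(1-A))"
  by (cases a) (simp_all add: gc_def hp_def field_simps)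

lemma frac_eqI: "(b::complex) \<noteq> 0 \<Longrightarrow> d \<noteq> 0 \<Longrightarrow> a*d = c*b \<Longrightarrow> a/b = c/d"
  by (simp add: frac_eq_eq)

lemma neg_nz: "(1::complex) - y \<noteq> 0 \<Longrightarrow> y - 1 \<noteq> 0"
proof -
  assume "1 - y \<noteq> 0"
  have "y - 1 = -(1-y)" by simp
  then show ?thesis using \<open>1 - y \<noteq> 0\<close> by (simp only: neg_equal_0_iff_equal) simp
qed

lemma om_inv:
  fixes x s :: complex
  assumes "x \<noteq> 0" "1 - x^2 \<noteq> 0" "x - s \<noteq> 0" "s \<noteq> 0"
  shows "om s (1/x) = x*(x+s)/(s*(x^2-1)*(x-s))"
proof -
  have h: "x^2 - 1 \<noteq> 0" using assms(2) by (rule neg_nz)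
  have a1: "(1/x)*(1+s*(1/x)) = (x+s)/x^2"
    using assms(1) by (simp add: field_simps power2_eq_square)
  have a2: "s*(1-(1/x)^2)*(1-s*(1/x)) = s*(x^2-1)*(x-s)/x^3"
    using assms(1) by (simp add: field_simps power2_eq_square power3_eq_cube)
  have "x^3 \<noteq> 0" "x^2 \<noteq> 0" using assms(1) by auto
  show ?thesis unfolding om_def a1 a2 divide_divide_times_eq
    apply (rule frac_eqI) using assms h \<open>x^2 \<noteq> 0\<close> apply simp using assms h apply simp by algebra
qed

lemma om_sum:
  fixes s x :: complex
  assumes "x \<noteq> 0" "s \<noteq> 0" "1-x^2 \<noteq> 0" "1-s*x \<noteq> 0" "x-s \<noteq> 0"
  shows "x*(1+s*x)/(s*(1-x^2)*(1-s*x)) + x*(x+s)/(s*(x^2-1)*(x-s)) = (-2*x)/((1-s*x)*(x-s))"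
proof -
  have h: "x^2 - 1 \<noteq> 0" using assms(3) by (rule neg_nz)
  have "x*(1+s*x)/(s*(1-x^2)*(1-s*x)) + x*(x+s)/(s*(x^2-1)*(x-s)) =
     (x*(1+s*x)*(s*(x^2-1)*(x-s)) + x*(x+s)*(s*(1-x^2)*(1-s*x)))/((s*(1-x^2)*(1-s*x))*(s*(x^2-1)*(x-s)))"
    by (rule add_frac_eq) (use assms h in simp_all)
  also have "\<dots> = (-2*x)/((1-s*x)*(x-s))"
    apply (rule frac_eqI) using assms h apply simp using assms apply simp by algebra
  finally show ?thesis .
qed

lemma term1:
  fixes s x d1 d2 k1 k2 F u v w :: complex
  assumes "x \<noteq> 0" "s \<noteq> 0" "u \<noteq> 0" "v \<noteq> 0" "w \<noteq> 0" "d1 \<noteq> 0" "d2 \<noteq> 0"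
  shows "x*(1+s*x)/(s*u*v) * (k1/(s^2*x*d1)) * (k2/(s^2*x*d2)) * F
     = (1+s*x)*(k1*k2)*s*x^2*w*F / (s^6*x^3*u*v*w*(d1*d2))"
  using assms by (simp add: field_simps power2_eq_square power3_eq_cube) (algebra)?

lemma term2:
  fixes s x d1 d2 k1 k2 F u v w :: complex
  assumes "x \<noteq> 0" "s \<noteq> 0" "u \<noteq> 0" "v \<noteq> 0" "w \<noteq> 0" "d1 \<noteq> 0" "d2 \<noteq> 0"
  shows "x*(x+s)/(s*(-u)*w) * (k1/(s^2*x*d1)) * (k2/(s^2*x*d2)) * F
     = - ((x+s)*(k1*k2)*s*x^2*v*F) / (s^6*x^3*u*v*w*(d1*d2))"
  using assms by (simp add: field_simps power2_eq_square power3_eq_cube) (algebra)?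

lemma term3:
  fixes s x d1 d2 k1 k2 F u v w :: complex
  assumes "x \<noteq> 0" "s \<noteq> 0" "u \<noteq> 0" "v \<noteq> 0" "w \<noteq> 0" "d1 \<noteq> 0" "d2 \<noteq> 0"
  shows "((-2*x)/(v*w)) * ((k1/(s*x*d1)) * (k2/(s*x*d2))) * F
     = - (2*s^4*x^2*u*(k1*k2)*F) / (s^6*x^3*u*v*w*(d1*d2))"
  using assms by (simp add: field_simps power2_eq_square power3_eq_cube) (algebra)?

lemma Dop_gen:
  assumes "x \<noteq> 0" "s \<noteq> 0" "1-x^2 \<noteq> 0" "1-s*x \<noteq> 0" "x-s \<noteq> 0" "A \<noteq> 1" "B \<noteq> 1"
  shows "Dop q s a b A B f x =
    ((1+s*x)*(kp s a A x * kp s b B x)*s*x^2*(x-s)*f (q*x)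
     - (x+s)*(kt s a A x * kt s b B x)*s*x^2*(1-s*x)*f (x/q)
     + 2*s^4*x^2*(1-x^2)*(hp s a A x * hp s b B x)*f x)
    / (s^6*x^3*(1-x^2)*(1-s*x)*(x-s)*((1-A)*(1-B)))"
proof -
  have d: "1-A \<noteq> 0" "1-B \<noteq> 0" using assms by auto
  have h: "x^2 - 1 \<noteq> 0" using assms(3) by (rule neg_nz)
  have mx: "x^2 - 1 = - (1 - x^2)" by simp
  have e1: "om s x * kc s a A x * kc s b B x * f (q*x) = (1+s*x)*(kp s a A x * kp s b B x)*s*x^2*(x-s)*f (q*x) / (s^6*x^3*(1-x^2)*(1-s*x)*(x-s)*((1-A)*(1-B)))"
    unfolding kc_kp[OF assms(1,2,6)] kc_kp[OF assms(1,2,7)] om_def by (rule term1[OF assms(1-5) d])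
  have e2: "om s (1/x) * kc s a A (1/x) * kc s b B (1/x) * f (x/q) = - ((x+s)*(kt s a A x * kt s b B x)*s*x^2*(1-s*x)*f (x/q)) / (s^6*x^3*(1-x^2)*(1-s*x)*(x-s)*((1-A)*(1-B)))"
    unfolding kc_kt[OF assms(1,2,6)] kc_kt[OF assms(1,2,7)] om_inv[OF assms(1,3,5,2)] mx by (rule term2[OF assms(1-5) d])
  have e3: "(om s x + om s (1/x)) * (gc s a A x * gc s b B x) * f x = - (2*s^4*x^2*(1-x^2)*(hp s a A x * hp s b B x)*f x) / (s^6*x^3*(1-x^2)*(1-s*x)*(x-s)*((1-A)*(1-B)))"
    unfolding gc_hp[OF assms(1,2,6)] gc_hp[OF assms(1,2,7)] om_inv[OF assms(1,3,5,2)] om_def[of s x] om_sum[OF assms(1-5)] by (rule term3[OF assms(1-5) d])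
  have fr3: "\<And>a b c D. a/D + (-b)/D - (-c)/D = (a - b + c)/(D::complex)"
    by (simp add: add_divide_distrib diff_divide_distrib)
  show ?thesis unfolding Dop_def e1 e2 e3 by (rule fr3)
qed

definition an :: "complex \<Rightarrow> bool \<Rightarrow> bool \<Rightarrow> complex \<Rightarrow> complex \<Rightarrow> complex \<Rightarrow> complex" where
  "an s a b A B Q = (if a \<or> b then 0 else (s^4*Q - A*B)^2)"
definition bn :: "complex \<Rightarrow> bool \<Rightarrow> bool \<Rightarrow> complex \<Rightarrow> complex \<Rightarrow> complex \<Rightarrow> complex" where
  "bn s a b A B Q = (if a then (if b then 0 else - (s^3*Q*(s^2*Q-B)^2))
     else (if b then - (s^3*Q*(s^2*Q-A)^2) else
       (0 - (s^8*(1+s^2)*Q^4)+Q^3*(2*s^8+(1+s^2)*(A+B)*s^6+2*A*B*s^6)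
        -Q^2*(2*(A+B)*s^6+2*(1+s^2)*A*B*s^4+2*A*B*(A+B)*s^4)
        +Q*(2*A*B*s^4+(1+s^2)*A*B*(A+B)*s^2+2*A^2*B^2*s^2)-(1+s^2)*A^2*B^2)))"
definition gn :: "complex \<Rightarrow> bool \<Rightarrow> bool \<Rightarrow> complex \<Rightarrow> complex \<Rightarrow> complex \<Rightarrow> complex" where
  "gn s a b A B Q = (if a then (if b then s^4*Q^2*(1-Q)^2 else s^3*Q*(1-Q)^2*(s^2*Q-B)*(Q-B))
     else (if b then s^3*Q*(1-Q)^2*(s^2*Q-A)*(Q-A) else
       s^2*(1-Q)^2*(s^2*Q-A)*(s^2*Q-B)*(Q-A)*(Q-B)))"

lemma poly_k_True_True:
  fixes s x P A B :: complex
  shows "((1+s*x)*(kp s True A x * kp s True B x)*(x-s)*((1+s*P*x)*(1+s*(s^2*P)*x))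
          - (x+s)*(kt s True A x * kt s True B x)*(1-s*x)*((x+s*P)*(x+s*(s^2*P)))
          + 2*s^4*(1-x^2)*(hp s True A x * hp s True B x)*((1+s*P*x)*(x+s*P)))*(s^2*P)^2
       = (an s True True A B (s^2*P) * ((1+s*P*x)*(x+s*P)*(1+s*(s^2*P)*x)*(x+s*(s^2*P))) + bn s True True A B (s^2*P) * ((1+s*P*x)*(x+s*P))*x
          + gn s True True A B (s^2*P) * x^2) * ((1-x^2)*(1-s*x)*(x-s))"
  unfolding an_def bn_def gn_def kp_def kt_def hp_def by (simp only: if_True if_False simp_thms) algebra

lemma poly_0_True_True:
  fixes s x A B :: complex
  shows "s*(1+s*x)*(kp s True A x * kp s True B x)*(x-s)
          - s*(x+s)*(kt s True A x * kt s True B x)*(1-s*x)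
          + 2*s^4*(1-x^2)*(hp s True A x * hp s True B x)
       = (an s True True A B 1 * ((1+s*x)*(x+s)) + bn s True True A B 1 * x) * ((1-x^2)*(1-s*x)*(x-s))"
  unfolding an_def bn_def gn_def kp_def kt_def hp_def by (simp only: if_True if_False simp_thms) algebra

lemma poly_k_True_False:
  fixes s x P A B :: complex
  shows "((1+s*x)*(kp s True A x * kp s False B x)*(x-s)*((1+s*P*x)*(1+s*(s^2*P)*x))
          - (x+s)*(kt s True A x * kt s False B x)*(1-s*x)*((x+s*P)*(x+s*(s^2*P)))
          + 2*s^4*(1-x^2)*(hp s True A x * hp s False B x)*((1+s*P*x)*(x+s*P)))*(s^2*P)^2
       = (an s True False A B (s^2*P) * ((1+s*P*x)*(x+s*P)*(1+s*(s^2*P)*x)*(x+s*(s^2*P))) + bn s True False A B (s^2*P) * ((1+s*P*x)*(x+s*P))*x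
          + gn s True False A B (s^2*P) * x^2) * ((1-x^2)*(1-s*x)*(x-s))"
  unfolding an_def bn_def gn_def kp_def kt_def hp_def by (simp only: if_True if_False simp_thms) algebra

lemma poly_0_True_False:
  fixes s x A B :: complex
  shows "s*(1+s*x)*(kp s True A x * kp s False B x)*(x-s)
          - s*(x+s)*(kt s True A x * kt s False B x)*(1-s*x)
          + 2*s^4*(1-x^2)*(hp s True A x * hp s False B x)
       = (an s True False A B 1 * ((1+s*x)*(x+s)) + bn s True False A B 1 * x) * ((1-x^2)*(1-s*x)*(x-s))"
  unfolding an_def bn_def gn_def kp_def kt_def hp_def by (simp only: if_True if_False simp_thms) algebra

lemma poly_k_False_True:
  fixes s x P A B :: complex
  shows "((1+s*x)*(kp s False A x * kp s True B x)*(x-s)*((1+s*P*x)*(1+s*(s^2*P)*x))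
          - (x+s)*(kt s False A x * kt s True B x)*(1-s*x)*((x+s*P)*(x+s*(s^2*P)))
          + 2*s^4*(1-x^2)*(hp s False A x * hp s True B x)*((1+s*P*x)*(x+s*P)))*(s^2*P)^2
       = (an s False True A B (s^2*P) * ((1+s*P*x)*(x+s*P)*(1+s*(s^2*P)*x)*(x+s*(s^2*P))) + bn s False True A B (s^2*P) * ((1+s*P*x)*(x+s*P))*x
          + gn s False True A B (s^2*P) * x^2) * ((1-x^2)*(1-s*x)*(x-s))"
  unfolding an_def bn_def gn_def kp_def kt_def hp_def by (simp only: if_True if_False simp_thms) algebra

lemma poly_0_False_True:
  fixes s x A B :: complex
  shows "s*(1+s*x)*(kp s False A x * kp s True B x)*(x-s)
          - s*(x+s)*(kt s False A x * kt s True B x)*(1-s*x)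
          + 2*s^4*(1-x^2)*(hp s False A x * hp s True B x)
       = (an s False True A B 1 * ((1+s*x)*(x+s)) + bn s False True A B 1 * x) * ((1-x^2)*(1-s*x)*(x-s))"
  unfolding an_def bn_def gn_def kp_def kt_def hp_def by (simp only: if_True if_False simp_thms) algebra

lemma poly_k_False_False:
  fixes s x P A B :: complex
  shows "((1+s*x)*(kp s False A x * kp s False B x)*(x-s)*((1+s*P*x)*(1+s*(s^2*P)*x))
          - (x+s)*(kt s False A x * kt s False B x)*(1-s*x)*((x+s*P)*(x+s*(s^2*P)))
          + 2*s^4*(1-x^2)*(hp s False A x * hp s False B x)*((1+s*P*x)*(x+s*P)))*(s^2*P)^2
       = (an s False False A B (s^2*P) * ((1+s*P*x)*(x+s*P)*(1+s*(s^2*P)*x)*(x+s*(s^2*P))) + bn s False False A B (s^2*P) * ((1+s*P*x)*(x+s*P))*x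
          + gn s False False A B (s^2*P) * x^2) * ((1-x^2)*(1-s*x)*(x-s))"
  unfolding an_def bn_def gn_def kp_def kt_def hp_def by (simp only: if_True if_False simp_thms) algebra

lemma poly_0_False_False:
  fixes s x A B :: complex
  shows "s*(1+s*x)*(kp s False A x * kp s False B x)*(x-s)
          - s*(x+s)*(kt s False A x * kt s False B x)*(1-s*x)
          + 2*s^4*(1-x^2)*(hp s False A x * hp s False B x)
       = (an s False False A B 1 * ((1+s*x)*(x+s)) + bn s False False A B 1 * x) * ((1-x^2)*(1-s*x)*(x-s))"
  unfolding an_def bn_def gn_def kp_def kt_def hp_def by (simp only: if_True if_False simp_thms power_one mult_1_left mult_1_right) algebra

lemma poly_k:
  fixes s x P A B :: complex
  shows "((1+s*x)*(kp s a A x * kp s b B x)*(x-s)*((1+s*P*x)*(1+s*(s^2*P)*x))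
          - (x+s)*(kt s a A x * kt s b B x)*(1-s*x)*((x+s*P)*(x+s*(s^2*P)))
          + 2*s^4*(1-x^2)*(hp s a A x * hp s b B x)*((1+s*P*x)*(x+s*P)))*(s^2*P)^2
       = (an s a b A B (s^2*P) * ((1+s*P*x)*(x+s*P)*(1+s*(s^2*P)*x)*(x+s*(s^2*P))) + bn s a b A B (s^2*P) * ((1+s*P*x)*(x+s*P))*x
          + gn s a b A B (s^2*P) * x^2) * ((1-x^2)*(1-s*x)*(x-s))"
  by (cases a; cases b) (simp_all only: poly_k_True_True poly_k_True_False poly_k_False_True poly_k_False_False)

lemma poly_0:
  fixes s x A B :: complex
  shows "s*(1+s*x)*(kp s a A x * kp s b B x)*(x-s)
          - s*(x+s)*(kt s a A x * kt s b B x)*(1-s*x)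
          + 2*s^4*(1-x^2)*(hp s a A x * hp s b B x)
       = (an s a b A B 1 * ((1+s*x)*(x+s)) + bn s a b A B 1 * x) * ((1-x^2)*(1-s*x)*(x-s))"
  by (cases a; cases b) (simp_all only: poly_0_True_True poly_0_True_False poly_0_False_True poly_0_False_False)

lemma gn_1: "gn s a b A B 1 = 0" by (simp add: gn_def)

lemma asm0:
  fixes s x u v w d K1 K2 H al be :: complex
  assumes nz: "s \<noteq> 0" "x \<noteq> 0" "u \<noteq> 0" "v \<noteq> 0" "w \<noteq> 0" "d \<noteq> 0"
    and eq: "s*(1+s*x)*K1*w - s*(x+s)*K2*v + 2*s^4*u*H = (al*((1+s*x)*(x+s)) + be*x)*(u*v*w)"
  shows "((1+s*x)*K1*s*x^2*w*1 - (x+s)*K2*s*x^2*v*1 + 2*s^4*x^2*u*H*1)/(s^6*x^3*u*v*w*d)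
     = al/(s^6*1^2*d) * ((1+s*x)*(1+s/x)) + be/(s^6*1^2*d) * 1 + 0/(s^6*1^2*d) * 1"
proof -
  have "(1+s*x)*K1*s*x^2*w*1 - (x+s)*K2*s*x^2*v*1 + 2*s^4*x^2*u*H*1
      = x^2 * (s*(1+s*x)*K1*w - s*(x+s)*K2*v + 2*s^4*u*H)" by algebra
  also have "\<dots> = x^2 * ((al*((1+s*x)*(x+s)) + be*x)*(u*v*w))" by (simp only: eq)
  finally have e: "(1+s*x)*K1*s*x^2*w*1 - (x+s)*K2*s*x^2*v*1 + 2*s^4*x^2*u*H*1
      = x^2 * ((al*((1+s*x)*(x+s)) + be*x)*(u*v*w))" .
  show ?thesis unfolding e using nz by (simp add: field_simps) (algebra)?
qed

lemma asmk:
  fixes s x u v w d K1 K2 H al be ga p F1 F2 F3 G2 u1 v1 u1' v1' Q :: complex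
  assumes nz: "s \<noteq> 0" "x \<noteq> 0" "u \<noteq> 0" "v \<noteq> 0" "w \<noteq> 0" "d \<noteq> 0" "Q \<noteq> 0"
    and h1: "F1*(s*x) = p*(u1*v1)" and h2: "F2*(s*x) = p*(u1'*v1')"
    and h3: "F3*x = p*(u1*u1')" and h4: "G2*x^2 = p*(u1*u1'*v1*v1')"
    and eq: "((1+s*x)*K1*w*(u1*v1) - (x+s)*K2*v*(u1'*v1') + 2*s^4*u*H*(u1*u1'))*Q^2
             = (al*(u1*u1'*v1*v1') + be*(u1*u1')*x + ga*x^2)*(u*v*w)"
  shows "((1+s*x)*K1*s*x^2*w*F1 - (x+s)*K2*s*x^2*v*F2 + 2*s^4*x^2*u*H*F3)/(s^6*x^3*u*v*w*d)
     = al/(s^6*Q^2*d) * G2 + be/(s^6*Q^2*d) * F3 + ga/(s^6*Q^2*d) * p"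
proof -
  have sx: "s*x \<noteq> 0" using nz by simp
  have f1: "F1 = p*(u1*v1)/(s*x)" using h1 sx by (simp add: eq_divide_eq)
  have f2: "F2 = p*(u1'*v1')/(s*x)" using h2 sx by (simp add: eq_divide_eq)
  have f3: "F3 = p*(u1*u1')/x" using h3 nz by (simp add: eq_divide_eq)
  have g2: "G2 = p*(u1*u1'*v1*v1')/x^2" using h4 nz by (simp add: eq_divide_eq)
  have "(1+s*x)*K1*s*x^2*w*F1 - (x+s)*K2*s*x^2*v*F2 + 2*s^4*x^2*u*H*F3
      = p * x * ((1+s*x)*K1*w*(u1*v1) - (x+s)*K2*v*(u1'*v1') + 2*s^4*u*H*(u1*u1'))"
    unfolding f1 f2 f3 using nz by (simp add: field_simps power2_eq_square) (algebra)?
  then have e: "((1+s*x)*K1*s*x^2*w*F1 - (x+s)*K2*s*x^2*v*F2 + 2*s^4*x^2*u*H*F3) * Q^2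
      = p * x * ((al*(u1*u1'*v1*v1') + be*(u1*u1')*x + ga*x^2)*(u*v*w))"
    using eq by (simp add: mult.assoc)
  have "((1+s*x)*K1*s*x^2*w*F1 - (x+s)*K2*s*x^2*v*F2 + 2*s^4*x^2*u*H*F3)/(s^6*x^3*u*v*w*d)
     = (((1+s*x)*K1*s*x^2*w*F1 - (x+s)*K2*s*x^2*v*F2 + 2*s^4*x^2*u*H*F3) * Q^2)/(s^6*x^3*u*v*w*d*Q^2)"
    using nz by simp
  also have "\<dots> = (p * x * ((al*(u1*u1'*v1*v1') + be*(u1*u1')*x + ga*x^2)*(u*v*w)))/(s^6*x^3*u*v*w*d*Q^2)"
    unfolding e ..
  also have "\<dots> = al/(s^6*Q^2*d) * G2 + be/(s^6*Q^2*d) * F3 + ga/(s^6*Q^2*d) * p"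
    unfolding g2 f3 using nz by (simp add: field_simps power2_eq_square power3_eq_cube) (algebra)?
  finally show ?thesis .
qed

definition co :: "(complex \<Rightarrow> bool \<Rightarrow> bool \<Rightarrow> complex \<Rightarrow> complex \<Rightarrow> complex \<Rightarrow> complex)
   \<Rightarrow> complex \<Rightarrow> bool \<Rightarrow> bool \<Rightarrow> complex \<Rightarrow> complex \<Rightarrow> complex \<Rightarrow> complex" where
  "co f s a b A B Q = f s a b A B Q / (s^6*Q^2*((1-A)*(1-B)))"

lemma Dop_phi:
  assumes sq: "s^2 = q" and nz: "x \<noteq> 0" "s \<noteq> 0" "1-x^2 \<noteq> 0" "1-s*x \<noteq> 0" "x-s \<noteq> 0" "A \<noteq> 1" "B \<noteq> 1"
  shows "Dop q s a b A B (phi q s k) x =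
      co an s a b A B (q^k) * phi q s (Suc k) x + co bn s a b A B (q^k) * phi q s k x
      + co gn s a b A B (q^k) * phi q s (k-1) x"
proof -
  have d: "(1-A)*(1-B) \<noteq> 0" using nz by auto
  have q0: "q \<noteq> 0" using sq nz by auto
  note DG = Dop_gen[OF nz(1-7), of q a b]
  show ?thesis
  proof (cases k)
    case 0
    have p0: "phi q s 0 = (\<lambda>_. 1)" by (simp add: phi_def fun_eq_iff)
    have p1: "phi q s (Suc 0) x = (1+s*x)*(1+s/x)" by (simp add: phi_def qpoch_def)
    show ?thesis unfolding 0 DG p0 p1 co_def gn_1 power_0 diff_0_eq_0
      by (rule asm0[OF nz(2) nz(1) nz(3-5) d poly_0])
  next
    case (Suc j)
    have qs: "q^(Suc j) = s^2*q^j" using sq by simp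
    have h1: "phi q s (Suc j) (q*x) * (s*x) = phi q s j x * ((1 + s*q^j*x) * (1 + s*q^(Suc j)*x))"
      by (rule phi_up[OF sq nz(1,2)])
    have h2: "phi q s (Suc j) (x/q) * (s*x) = phi q s j x * ((x + s*q^j) * (x + s*q^(Suc j)))"
    proof -
      have "phi q s (Suc j) (x/q) * (s*x) = (phi q s (Suc j) (x/q) * s) * x" by (simp add: mult_ac)
      also have "\<dots> = phi q s j x * ((x + s*q^j) * ((1 + s*q^(Suc j)/x)*x))"
        unfolding phi_down[OF sq nz(1,2)] by (simp add: mult_ac)
      also have "(1 + s*q^(Suc j)/x)*x = x + s*q^(Suc j)" using nz(1) by (simp add: field_simps)
      finally show ?thesis .
    qed
    have h3: "phi q s (Suc j) x * x = phi q s j x * ((1 + s*q^j*x) * (x + s*q^j))"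
    proof -
      have "(1 + s*q^j/x) * x = x + s*q^j" using nz(1) by (simp add: field_simps)
      then show ?thesis unfolding phi_Suc by (metis mult.assoc mult.left_commute)
    qed
    have h4: "phi q s (Suc (Suc j)) x * x^2 = phi q s j x * ((1 + s*q^j*x) * (x + s*q^j) * (1 + s*q^(Suc j)*x) * (x + s*q^(Suc j)))"
    proof -
      have "(1 + s*q^(Suc j)/x) * x = x + s*q^(Suc j)" using nz(1) by (simp add: field_simps)
      then have "phi q s (Suc (Suc j)) x * x^2 = (phi q s (Suc j) x * x) * ((1 + s*q^(Suc j)*x) * (x + s*q^(Suc j)))"
        unfolding phi_Suc[of q s "Suc j"] by (simp add: power2_eq_square mult_ac)
      then show ?thesis unfolding h3 by (simp add: mult_ac)
    qed
    have pk: "((1+s*x)*(kp s a A x * kp s b B x)*(x-s)*((1+s*q^j*x)*(1+s*q^(Suc j)*x))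
          - (x+s)*(kt s a A x * kt s b B x)*(1-s*x)*((x+s*q^j)*(x+s*q^(Suc j)))
          + 2*s^4*(1-x^2)*(hp s a A x * hp s b B x)*((1+s*q^j*x)*(x+s*q^j)))*(q^(Suc j))^2
       = (an s a b A B (q^(Suc j)) * ((1+s*q^j*x)*(x+s*q^j)*(1+s*q^(Suc j)*x)*(x+s*q^(Suc j)))
          + bn s a b A B (q^(Suc j)) * ((1+s*q^j*x)*(x+s*q^j))*x
          + gn s a b A B (q^(Suc j)) * x^2) * ((1-x^2)*(1-s*x)*(x-s))"
      unfolding qs by (rule poly_k)
    have Q0: "q^(Suc j) \<noteq> 0" using q0 by simp
    show ?thesis unfolding Suc DG co_def diff_Suc_1
      by (rule asmk[OF nz(2) nz(1) nz(3-5) d Q0 h1 h2 h3 h4 pk])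
  qed
qed

lemma cf_0[simp]: "cf q N A B 0 = 1" by (simp add: cf_def)

lemma cf_zero: "q \<noteq> 0 \<Longrightarrow> n < k \<Longrightarrow> cf q (q^n) A B k = 0"
  by (simp add: cf_def qpoch_zero_ge)

lemma qpoch_Suc_nz: "qpoch q y (Suc k) \<noteq> 0 \<Longrightarrow> qpoch q y k \<noteq> 0 \<and> 1 - y*q^k \<noteq> 0"
  by (simp add: qpoch_Suc)

lemma cf_Suc_gen:
  assumes "qpoch q q (Suc k) \<noteq> 0" "qpoch q (q/A) (Suc k) \<noteq> 0" "qpoch q (q/B) (Suc k) \<noteq> 0"
  shows "cf q N A B (Suc k) = cf q N A B k * (q*(1 - 1/N*q^k)*(1 - q*N/(A*B)*q^k)
      / ((1 - q*q^k)*(1 - q*q^k)*(1 - q/A*q^k)*(1 - q/B*q^k)))"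
proof -
  from qpoch_Suc_nz[OF assms(1)] qpoch_Suc_nz[OF assms(2)] qpoch_Suc_nz[OF assms(3)]
  have nz: "qpoch q q k \<noteq> 0" "1 - q*q^k \<noteq> 0" "qpoch q (q/A) k \<noteq> 0" "1 - q/A*q^k \<noteq> 0"
     "qpoch q (q/B) k \<noteq> 0" "1 - q/B*q^k \<noteq> 0" by auto
  show ?thesis unfolding cf_def qpoch_Suc power_Suc
    using nz by (simp add: field_simps)
qed

lemma cf_shift_gen:
  assumes "1/N2 = q*(1/N)" "q*N2/(A2*B2) = q*(q*N/(A*B))" "q/A2 = q*(q/A)" "q/B2 = q*(q/B)"
    "qpoch q q (Suc k) \<noteq> 0" "qpoch q (q/A) (Suc k) \<noteq> 0" "qpoch q (q/B) (Suc k) \<noteq> 0"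
  shows "cf q N A B (Suc k) = cf q N2 A2 B2 k * (q*(1 - 1/N)*(1 - q*N/(A*B))
      / ((1 - q*q^k)*(1 - q*q^k)*(1 - q/A)*(1 - q/B)))"
proof -
  have e: "qpoch q (1/N) (Suc k) = (1 - 1/N) * qpoch q (1/N2) k"
     "qpoch q (q*N/(A*B)) (Suc k) = (1 - q*N/(A*B)) * qpoch q (q*N2/(A2*B2)) k"
     "qpoch q (q/A) (Suc k) = (1 - q/A) * qpoch q (q/A2) k"
     "qpoch q (q/B) (Suc k) = (1 - q/B) * qpoch q (q/B2) k"
    using assms(1-4) by (auto intro!: qpoch_Suc_left)
  have nz: "qpoch q q k \<noteq> 0" "1 - q*q^k \<noteq> 0" "qpoch q (q/A2) k \<noteq> 0" "1 - q/A \<noteq> 0"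
     "qpoch q (q/B2) k \<noteq> 0" "1 - q/B \<noteq> 0"
    using qpoch_Suc_nz[OF assms(5)] assms(6,7) unfolding e by auto
  show ?thesis unfolding cf_def e qpoch_Suc[of q q] power_Suc
    using nz by (simp add: field_simps)
qed

lemma pre_shift_gen:
  assumes "q/A2 = q*(q/A)" "q/B2 = q*(q/B)" "q^(n+1)/(A2*B2) = q*(q^(n+2)/(A*B))"
    "qpoch q (q^(n+2)/(A*B)) (Suc n) \<noteq> 0" "s \<noteq> 0"
  shows "pre q s (Suc n) A B = pre q s n A2 B2 * (-(1 - q^(Suc n))*(1 - q/A)*(1 - q/B)/(s*(1 - q^(n+2)/(A*B))))"
proof -
  have e: "qpoch q (q/A) (Suc n) = (1 - q/A) * qpoch q (q/A2) n"
     "qpoch q (q/B) (Suc n) = (1 - q/B) * qpoch q (q/B2) n"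
     "qpoch q (q^(n+2)/(A*B)) (Suc n) = (1 - q^(n+2)/(A*B)) * qpoch q (q^(n+1)/(A2*B2)) n"
    using assms(1-3) by (auto intro!: qpoch_Suc_left)
  have nz: "1 - q^(n+2)/(A*B) \<noteq> 0" "qpoch q (q^(n+1)/(A2*B2)) n \<noteq> 0"
    using assms(4) unfolding e by auto
  have e2: "q^(Suc n + 1) = q^(n+2)" by simp
  have at: "\<And>X f1 a Y b Z c W. c \<noteq> 0 \<Longrightarrow> W \<noteq> 0 \<Longrightarrow>
      (-1)^(Suc n)/s^(Suc n) * (X*f1 * (a*Y) * (b*Z))/(c*W) = (-1)^n/s^n*(X*Y*Z)/W * (-f1*a*b/(s*c))"
    using assms(5) by (simp add: field_simps)
  show ?thesis unfolding pre_def e2 e qpoch_Suc[of q q] power_Suc[symmetric]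
    by (rule at[OF nz])

qed

lemma Dop_sum: "finite S \<Longrightarrow> Dop q s a b A B (\<lambda>z. \<Sum>k\<in>S. h k z) x = (\<Sum>k\<in>S. Dop q s a b A B (h k) x)"
  unfolding Dop_def by (simp add: sum_distrib_left sum.distrib sum_subtractf)

lemma Dop_cmult: "Dop q s a b A B (\<lambda>z. c * f z) x = c * Dop q s a b A B f x"
  unfolding Dop_def by (simp add: algebra_simps)

lemma reindex:
  fixes c a b g :: "nat \<Rightarrow> complex"
  assumes "c (Suc n) = 0" "c (Suc (Suc n)) = 0" "g 0 = 0"
  shows "(\<Sum>k\<le>n. c k * (a k * f (Suc k) + b k * f k + g k * f (k-1)))
     = (\<Sum>j\<le>Suc n. ((if j = 0 then 0 else c (j-1) * a (j-1)) + c j * b j + c (Suc j) * g (Suc j)) * f j)"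
proof -
  have s1: "(\<Sum>j\<le>Suc n. (if j = 0 then 0 else c (j-1) * a (j-1)) * f j) = (\<Sum>k\<le>n. c k * a k * f (Suc k))"
    by (subst sum.atMost_Suc_shift) simp
  have s2: "(\<Sum>j\<le>Suc n. c j * b j * f j) = (\<Sum>k\<le>n. c k * b k * f k)"
    using assms(1) by simp
  have s3: "(\<Sum>j\<le>Suc n. c (Suc j) * g (Suc j) * f j) = (\<Sum>k\<le>n. c k * g k * f (k-1))"
  proof -
    have "(\<Sum>k\<le>Suc (Suc n). c k * g k * f (k-1)) = c 0 * g 0 * f (0-1) + (\<Sum>j\<le>Suc n. c (Suc j) * g (Suc j) * f j)"
      by (subst sum.atMost_Suc_shift) simp
    moreover have "(\<Sum>k\<le>Suc (Suc n). c k * g k * f (k-1)) = (\<Sum>k\<le>n. c k * g k * f (k-1))"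
      using assms(1,2) by simp
    ultimately show ?thesis using assms(3) by simp
  qed
  show ?thesis
    unfolding distrib_right sum.distrib s1 s2 s3
    by (simp add: sum.distrib algebra_simps)
qed

lemma sum_extend:
  fixes d :: "nat \<Rightarrow> complex"
  assumes "m \<le> M" "\<And>j. m < j \<Longrightarrow> d j = 0"
  shows "(\<Sum>j\<le>m. d j * f j) = (\<Sum>j\<le>M. d j * f j)"
proof -
  have "(\<Sum>j\<le>M. d j * f j) = (\<Sum>j\<le>m. d j * f j) + (\<Sum>j\<in>{m<..M}. d j * f j)"
    using assms(1) by (subst sum.union_disjoint[symmetric]) (auto intro!: sum.cong)
  also have "(\<Sum>j\<in>{m<..M}. d j * f j) = 0" using assms(2) by simp
  finally show ?thesis by simp
qed

lemma Dop_PAB: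
  assumes sq: "s^2 = q" and nz: "x \<noteq> 0" "s \<noteq> 0" "1-x^2 \<noteq> 0" "1-s*x \<noteq> 0" "x-s \<noteq> 0" "A \<noteq> 1" "B \<noteq> 1"
    and q0: "q \<noteq> 0"
  shows "Dop q s a b A B (\<lambda>z. PAB q s n z A' B') x = pre q s n A' B' *
     (\<Sum>j\<le>Suc n. ((if j = 0 then 0 else cf q (q^n) A' B' (j-1) * co an s a b A B (q^(j-1)))
         + cf q (q^n) A' B' j * co bn s a b A B (q^j)
         + cf q (q^n) A' B' (Suc j) * co gn s a b A B (q^(Suc j))) * phi q s j x)"
proof -
  have "Dop q s a b A B (\<lambda>z. PAB q s n z A' B') x
     = pre q s n A' B' * (\<Sum>k\<le>n. cf q (q^n) A' B' k * Dop q s a b A B (phi q s k) x)"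
    unfolding PAB_def by (simp add: Dop_cmult Dop_sum)
  also have "\<dots> = pre q s n A' B' * (\<Sum>k\<le>n. cf q (q^n) A' B' k *
      (co an s a b A B (q^k) * phi q s (Suc k) x + co bn s a b A B (q^k) * phi q s k x
      + co gn s a b A B (q^k) * phi q s (k-1) x))"
    by (simp add: Dop_phi[OF sq nz])
  also have "\<dots> = pre q s n A' B' *
     (\<Sum>j\<le>Suc n. ((if j = 0 then 0 else cf q (q^n) A' B' (j-1) * co an s a b A B (q^(j-1)))
         + cf q (q^n) A' B' j * co bn s a b A B (q^j)
         + cf q (q^n) A' B' (Suc j) * co gn s a b A B (q^(Suc j))) * phi q s j x)"
    by (subst reindex) (simp_all add: cf_zero q0 co_def gn_1)
  finally show ?thesis .
qed

lemma co_zero_an: "a \<or> b \<Longrightarrow> co an s a b A B Q = 0" by (simp add: co_def an_def)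
lemma co_zero_bn: "co bn s True True A B Q = 0" by (simp add: co_def bn_def)
lemma co_an_TT: "co an s True b A B Q = 0" by (simp add: co_def an_def)
lemma co_an_FT: "co an s a True A B Q = 0" by (simp add: co_def an_def)
lemma assemble1:
  assumes "(p::complex) * t * g = K" shows "(P*p)*(0 + c*0 + (d*t)*g) = K*P*d"
proof -
  have "(P*p)*(0 + c*0 + (d*t)*g) = P*d*(p*t*g)" by (simp add: algebra_simps)
  also have "\<dots> = P*d*K" using assms by simp
  finally show ?thesis by (simp add: algebra_simps)
qed

lemma finalize:
  fixes L d f :: "nat \<Rightarrow> complex"
  assumes "\<And>j. P * L j = K * P' * d j" "m \<le> M" "\<And>j. m < j \<Longrightarrow> d j = 0"
  shows "P * (\<Sum>j\<le>M. L j * f j) = K * (P' * (\<Sum>j\<le>m. d j * f j))"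
proof -
  have "P * (\<Sum>j\<le>M. L j * f j) = (\<Sum>j\<le>M. (P * L j) * f j)"
    by (simp add: sum_distrib_left mult.assoc)
  also have "\<dots> = (\<Sum>j\<le>M. K * P' * (d j * f j))" unfolding assms(1) by (simp add: mult.assoc)
  also have "\<dots> = K * P' * (\<Sum>j\<le>M. d j * f j)" by (simp add: sum_distrib_left)
  also have "(\<Sum>j\<le>M. d j * f j) = (\<Sum>j\<le>m. d j * f j)"
    using sum_extend[OF assms(2), of d f] assms(3) by simp
  finally show ?thesis by (simp add: mult.assoc)
qed

lemma id_pp:
  fixes s q A B N Q :: complex
  assumes sq: "s^2 = q" and nz: "s \<noteq> 0" "A \<noteq> 0" "B \<noteq> 0" "Q \<noteq> 0" "N \<noteq> 0" "1 - A \<noteq> 0" "1 - B \<noteq> 0"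
     "1 - q*Q \<noteq> 0" "1 - q*N/((q*A)*(q*B)) \<noteq> 0"
  shows "(-(1-N)*(1-q/(q*A))*(1-q/(q*B))/(s*(1 - q*N/((q*A)*(q*B)))))
       * (q*(1 - 1/N)*(1 - q*N/((q*A)*(q*B)))/((1-q*Q)*(1-q*Q)*(1 - q/(q*A))*(1 - q/(q*B))))
       * co gn s True True A B (q*Q) = (1-N)^2/(s*N*((1-A)*(1-B)))"
proof -
  have q0: "q \<noteq> 0" using sq nz by auto
  have a: "1 - q/(q*A) = (A-1)/A" "1 - q/(q*B) = (B-1)/B" "1 - 1/N = (N-1)/N"
     "1 - q*N/((q*A)*(q*B)) = (q*A*B - N)/(q*A*B)" using nz q0 by (auto simp: field_simps)
  have b: "A - 1 \<noteq> 0" "B - 1 \<noteq> 0" "q*A*B - N \<noteq> 0" using nz q0 a(4) by auto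
  show ?thesis unfolding a co_def gn_def if_True
    apply (simp only: times_divide_times_eq divide_divide_eq_left divide_divide_eq_right times_divide_eq_left times_divide_eq_right minus_divide_left)
    apply (rule frac_eqI)
    using nz q0 b apply simp
    using nz q0 apply simp
    unfolding sq[symmetric] by algebra
qed

lemma case_pp:
  assumes sq: "s^2 = q" and nz: "x \<noteq> 0" "s \<noteq> 0" "1-x^2 \<noteq> 0" "1-s*x \<noteq> 0" "x-s \<noteq> 0" "A \<noteq> 1" "B \<noteq> 1"
    and q0: "q \<noteq> 0" and A0: "A \<noteq> 0" and B0: "B \<noteq> 0"
    and qk: "\<And>k. 0 < k \<Longrightarrow> q^k \<noteq> 1"
    and hA: "\<And>m. m \<le> Suc n \<Longrightarrow> qpoch q (q/(q*A)) m \<noteq> 0"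
    and hB: "\<And>m. m \<le> Suc n \<Longrightarrow> qpoch q (q/(q*B)) m \<noteq> 0"
    and hZ: "qpoch q (q^(Suc n + 1)/((q*A)*(q*B))) (Suc n) \<noteq> 0"
  shows "Dop q s True True A B (\<lambda>z. PAB q s (Suc n) z (q*A) (q*B)) x
      = (1-q^(Suc n))^2/(s*q^(Suc n)*((1-A)*(1-B))) * PAB q s n x A B"
proof -
  define N where "N = q^(Suc n)"
  have N0: "N \<noteq> 0" using q0 by (simp add: N_def)
  have hq: "qpoch q q m \<noteq> 0" for m
  proof -
    have "1 - q*q^i \<noteq> 0" for i using qk[of "Suc i"] by simp
    then show ?thesis by (induction m) (auto simp: qpoch_Suc)
  qed
  have pre_eq: "pre q s (Suc n) (q*A) (q*B) = pre q s n A B *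
      (-(1 - q^(Suc n))*(1 - q/(q*A))*(1 - q/(q*B))/(s*(1 - q^(n+2)/((q*A)*(q*B)))))"
    by (rule pre_shift_gen) (use q0 A0 B0 hZ nz(2) in \<open>simp_all add: field_simps\<close>)
  have Zf: "1 - q*N/((q*A)*(q*B)) \<noteq> 0"
  proof -
    have "qpoch q (q^(n+2)/((q*A)*(q*B))) (Suc n) = (1 - q^(n+2)/((q*A)*(q*B))) * qpoch q (q*(q^(n+2)/((q*A)*(q*B)))) n"
      by (rule qpoch_Suc_left) simp
    then show ?thesis using hZ by (auto simp: N_def)
  qed
  have cf_eq: "cf q (q^(Suc n)) (q*A) (q*B) (Suc j) = cf q (q^n) A B j *
      (q*(1 - 1/N)*(1 - q*N/((q*A)*(q*B)))/((1 - q*q^j)*(1 - q*q^j)*(1 - q/(q*A))*(1 - q/(q*B))))"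
    if "j \<le> n" for j
    unfolding N_def
    by (rule cf_shift_gen) (use q0 A0 B0 hq hA hB that in \<open>simp_all add: field_simps\<close>)
  have tm: "pre q s (Suc n) (q*A) (q*B) *
      ((if j = 0 then 0 else cf q (q^(Suc n)) (q*A) (q*B) (j-1) * co an s True True A B (q^(j-1)))
         + cf q (q^(Suc n)) (q*A) (q*B) j * co bn s True True A B (q^j)
         + cf q (q^(Suc n)) (q*A) (q*B) (Suc j) * co gn s True True A B (q^(Suc j)))
      = (1-q^(Suc n))^2/(s*q^(Suc n)*((1-A)*(1-B))) * pre q s n A B * cf q (q^n) A B j" for j
  proof (cases "j \<le> n")
    case True
    have "1 - q*q^j \<noteq> 0" using qk[of "Suc j"] by simp
    moreover have "1 - A \<noteq> 0" "1 - B \<noteq> 0" "q^j \<noteq> 0" using nz q0 by auto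
    ultimately have idp: "(-(1-N)*(1-q/(q*A))*(1-q/(q*B))/(s*(1 - q*N/((q*A)*(q*B)))))
       * (q*(1 - 1/N)*(1 - q*N/((q*A)*(q*B)))/((1-q*q^j)*(1-q*q^j)*(1 - q/(q*A))*(1 - q/(q*B))))
       * co gn s True True A B (q*q^j) = (1-N)^2/(s*N*((1-A)*(1-B)))"
      using id_pp[OF sq nz(2) A0 B0 _ N0 _ _ _ Zf] by blast
    have e: "q^(n+2) = q*N" by (simp add: N_def)
    have ifz: "(if j = 0 then 0 else cf q (q^(Suc n)) (q*A) (q*B) (j-1) * co an s True True A B (q^(j-1))) = 0"
      by (simp add: co_an_TT)
    show ?thesis unfolding ifz pre_eq cf_eq[OF True] co_zero_bn
      unfolding e N_def[symmetric] power_Suc[of q j]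
      by (rule assemble1[OF idp])
  next
    case False
    have z1: "cf q (q^(Suc n)) (q*A) (q*B) (Suc j) = 0" "cf q (q^n) A B j = 0"
      using False q0 by (intro cf_zero; simp)+
    show ?thesis unfolding z1 co_zero_bn co_an_TT by simp
  qed
  show ?thesis
    apply (subst Dop_PAB[OF sq nz q0])
    apply (unfold PAB_def)
    apply (rule finalize[OF tm])
    using q0 by (auto intro: cf_zero)
qed

lemma shape2:
  fixes a b c d e f g h i k l m :: complex
  assumes "b \<noteq> 0" "d \<noteq> 0" "f \<noteq> 0" "h \<noteq> 0" "k \<noteq> 0" "m \<noteq> 0"
    and "a*c*(e*h*k + g*i*f)*m = l*b*d*f*h*k"
  shows "(a/b)*(c/d)*(e/f + (g/h)*(i/k)) = l/m"
  using assms by (simp add: field_simps)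

lemma id_pm:
  fixes s q A B N Q :: complex
  assumes sq: "s^2 = q" and nz: "s \<noteq> 0" "A \<noteq> 0" "B \<noteq> 0" "Q \<noteq> 0" "N \<noteq> 0" "1 - A \<noteq> 0" "1 - B \<noteq> 0"
     "1 - q*Q \<noteq> 0" "A - 1 \<noteq> 0" "A - N \<noteq> 0" "B - q \<noteq> 0" "A - Q \<noteq> 0" "B - q*Q \<noteq> 0" "B - q*q*Q \<noteq> 0"
  shows "((1 - q/(q*A))*(1 - q/B*N)/((1 - q/(q*A)*N)*(1 - q/B)))
       * ((1 - q/(q*A)*Q)*(1 - q/B)/((1 - q/(q*A))*(1 - q/B*Q)))
       * (co bn s True False A B Q
          + (q*(1 - 1/N*Q)*(1 - q*N/(A*B)*Q)/((1 - q*Q)*(1 - q*Q)*(1 - q/(q*A)*Q)*(1 - q/(B/q)*Q)))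
            * co gn s True False A B (q*Q))
     = - ((B - q*N)^2/(s^3*N*((1-A)*(1-B))))"
proof -
  have q0: "q \<noteq> 0" using sq nz by auto
  have f: "1 - q/(q*A) = (A-1)/A" "1 - q/(q*A)*Q = (A-Q)/A" "1 - q/(q*A)*N = (A-N)/A"
    "1 - q/B*Q = (B - q*Q)/B" "1 - q/B = (B-q)/B" "1 - q/B*N = (B - q*N)/B"
    "1 - 1/N*Q = (N-Q)/N" "1 - q*N/(A*B)*Q = (A*B - q*N*Q)/(A*B)" "1 - q/(B/q)*Q = (B - q*q*Q)/B"
    using nz q0 by (simp_all add: field_simps)
  have pi: "(1 - q/(q*A))*(1 - q/B*N)/((1 - q/(q*A)*N)*(1 - q/B)) = ((A-1)*(B-q*N))/((A-N)*(B-q))"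
    unfolding f
    apply (simp only: times_divide_times_eq divide_divide_eq_left divide_divide_eq_right times_divide_eq_left times_divide_eq_right)
    apply (rule frac_eqI) using nz q0 apply simp using nz q0 apply simp by algebra
  have tau: "(1 - q/(q*A)*Q)*(1 - q/B)/((1 - q/(q*A))*(1 - q/B*Q)) = ((A-Q)*(B-q))/((A-1)*(B-q*Q))"
    unfolding f
    apply (simp only: times_divide_times_eq divide_divide_eq_left divide_divide_eq_right times_divide_eq_left times_divide_eq_right)
    apply (rule frac_eqI) using nz q0 apply simp using nz q0 apply simp by algebra
  have rho: "q*(1 - 1/N*Q)*(1 - q*N/(A*B)*Q)/((1 - q*Q)*(1 - q*Q)*(1 - q/(q*A)*Q)*(1 - q/(B/q)*Q))
     = (q*(N-Q)*(A*B-q*N*Q))/(N*((1-q*Q)*(1-q*Q))*(A-Q)*(B-q*q*Q))"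
    unfolding f
    apply (simp only: times_divide_times_eq divide_divide_eq_left divide_divide_eq_right times_divide_eq_left times_divide_eq_right)
    apply (rule frac_eqI) using nz q0 apply simp using nz q0 apply simp by algebra
  have K: "- ((B - q*N)^2/(s^3*N*((1-A)*(1-B)))) = (-((B - q*N)^2))/(s^3*N*((1-A)*(1-B)))" by simp
  show ?thesis unfolding pi tau rho K co_def
    apply (rule shape2)
    using nz q0 apply simp
    using nz q0 apply simp
    using nz q0 apply simp
    using nz q0 apply simp
    using nz q0 apply simp
    using nz q0 apply simp
    unfolding bn_def gn_def if_True if_False sq[symmetric] by algebra
qed

lemma ratio_gen:
  fixes c P Qq U V U' V' f1 g1 f2 g2 :: complex
  assumes "U*f1 = g1*U'" "V'*f2 = g2*V" "U' \<noteq> 0" "V' \<noteq> 0" "f1 \<noteq> 0" "g1 \<noteq> 0" "f2 \<noteq> 0" "g2 \<noteq> 0"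
  shows "c*P/(Qq*U*V) = c*P/(Qq*U'*V') * (f1*g2/(g1*f2))"
proof -
  have U: "U = g1*U'/f1" using assms(1,5) by (simp add: eq_divide_eq)
  have V: "V = V'*f2/g2" using assms(2,8) by (simp add: eq_divide_eq mult.commute)
  show ?thesis unfolding U V using assms(3-8) by (simp add: field_simps)
qed

lemma qp_mixed:
  assumes "q \<noteq> 0" "A \<noteq> 0"
  shows "qpoch q (q/(q*A)) k * (1 - q/(q*A)*q^k) = (1 - q/(q*A)) * qpoch q (q/A) k"
    "qpoch q (q/B) k * (1 - q/B*q^k) = (1 - q/B) * qpoch q (q/(B/q)) k"
proof -
  have "qpoch q (q/(q*A)) (Suc k) = (1 - q/(q*A)) * qpoch q (q/A) k"
    by (rule qpoch_Suc_left) (use assms in simp)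
  then show "qpoch q (q/(q*A)) k * (1 - q/(q*A)*q^k) = (1 - q/(q*A)) * qpoch q (q/A) k"
    by (simp add: qpoch_Suc)
  have "qpoch q (q/B) (Suc k) = (1 - q/B) * qpoch q (q/(B/q)) k"
    by (rule qpoch_Suc_left) (simp add: field_simps)
  then show "qpoch q (q/B) k * (1 - q/B*q^k) = (1 - q/B) * qpoch q (q/(B/q)) k"
    by (simp add: qpoch_Suc)
qed

lemma assemble2:
  assumes "(p::complex) * t * (b + r * g) = K" shows "(P*p)*(0 + (d*t)*b + ((d*t)*r)*g) = K*P*d"
proof -
  have "(P*p)*(0 + (d*t)*b + ((d*t)*r)*g) = P*d*(p*t*(b + r*g))" by (simp add: algebra_simps)
  also have "\<dots> = P*d*K" using assms by simp
  finally show ?thesis by (simp add: algebra_simps)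
qed

lemma case_pm:
  assumes sq: "s^2 = q" and nz: "x \<noteq> 0" "s \<noteq> 0" "1-x^2 \<noteq> 0" "1-s*x \<noteq> 0" "x-s \<noteq> 0" "A \<noteq> 1" "B \<noteq> 1"
    and q0: "q \<noteq> 0" and A0: "A \<noteq> 0" and B0: "B \<noteq> 0"
    and qk: "\<And>k. 0 < k \<Longrightarrow> q^k \<noteq> 1"
    and hA': "\<And>m. m \<le> Suc n \<Longrightarrow> qpoch q (q/(q*A)) m \<noteq> 0"
    and hB': "\<And>m. m \<le> Suc n \<Longrightarrow> qpoch q (q/(B/q)) m \<noteq> 0"
    and hA: "\<And>m. m \<le> Suc n \<Longrightarrow> qpoch q (q/A) m \<noteq> 0"
    and hB: "\<And>m. m \<le> Suc n \<Longrightarrow> qpoch q (q/B) m \<noteq> 0"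
  shows "Dop q s True False A B (\<lambda>z. PAB q s n z (q*A) (B/q)) x
      = - ((B - q*q^n)^2/(s^3*q^n*((1-A)*(1-B)))) * PAB q s n x A B"
proof -
  define N where "N = q^n"
  have N0: "N \<noteq> 0" using q0 by (simp add: N_def)
  have hq: "qpoch q q m \<noteq> 0" for m
  proof -
    have "1 - q*q^i \<noteq> 0" for i using qk[of "Suc i"] by simp
    then show ?thesis by (induction m) (auto simp: qpoch_Suc)
  qed
  have qAB: "(q*A)*(B/q) = A*B" using q0 by simp
  have fA: "1 - q/(q*A)*q^k \<noteq> 0" if "k \<le> n" for k using qpoch_nz_fac[OF hA'[of "Suc n"]] that by simp
  have fB: "1 - q/B*q^k \<noteq> 0" if "k \<le> n" for k using qpoch_nz_fac[OF hB[of "Suc n"]] that by simp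
  have fB': "1 - q/(B/q)*q^k \<noteq> 0" if "k \<le> n" for k using qpoch_nz_fac[OF hB'[of "Suc n"]] that by simp
  have g1: "1 - q/(q*A) \<noteq> 0" using fA[of 0] by simp
  have g2: "1 - q/B \<noteq> 0" using fB[of 0] by simp
  have cf_rel: "cf q N (q*A) (B/q) j = cf q N A B j * ((1 - q/(q*A)*q^j)*(1 - q/B)/((1 - q/(q*A))*(1 - q/B*q^j)))"
    if "j \<le> n" for j
    unfolding cf_def qAB mult.assoc[symmetric]
    by (rule ratio_gen[OF qp_mixed[OF q0 A0] hA hB fA g1 fB g2]) (use that in auto)
  have pre_rel: "pre q s n (q*A) (B/q) = pre q s n A B * ((1 - q/(q*A))*(1 - q/B*N)/((1 - q/(q*A)*N)*(1 - q/B)))"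
  proof -
    have r: "(-1)^n/s^n * (qpoch q q n * U * V)/Z = (-1)^n/s^n * (qpoch q q n * U' * V')/Z * (g1*f2/(f1*g2))"
      if "U*f1 = g1*U'" "V'*f2 = g2*V" "U \<noteq> 0" "V \<noteq> 0" "f1 \<noteq> 0" "g1 \<noteq> 0" "f2 \<noteq> 0" "g2 \<noteq> 0"
      for U V U' V' f1 g1 f2 g2 Z :: complex
    proof -
      have U': "U' = U*f1/g1" using that(1,6) by (simp add: eq_divide_eq mult.commute)
      have V': "V' = g2*V/f2" using that(2,7) by (simp add: eq_divide_eq)
      show ?thesis unfolding U' V' using that(3-8) by (simp add: field_simps)
    qed
    show ?thesis unfolding pre_def qAB N_def
      by (rule r[OF qp_mixed[OF q0 A0] hA' hB' fA g1 fB g2]) auto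
  qed
  have cf_suc: "cf q N (q*A) (B/q) (Suc j) = cf q N (q*A) (B/q) j *
      (q*(1 - 1/N*q^j)*(1 - q*N/(A*B)*q^j)/((1 - q*q^j)*(1 - q*q^j)*(1 - q/(q*A)*q^j)*(1 - q/(B/q)*q^j)))"
    if "j \<le> n" for j
    using cf_Suc_gen[OF hq hA'[of "Suc j"] hB'[of "Suc j"], where N=N] that unfolding qAB by simp
  have tm: "pre q s n (q*A) (B/q) *
      ((if j = 0 then 0 else cf q (q^n) (q*A) (B/q) (j-1) * co an s True False A B (q^(j-1)))
         + cf q (q^n) (q*A) (B/q) j * co bn s True False A B (q^j)
         + cf q (q^n) (q*A) (B/q) (Suc j) * co gn s True False A B (q^(Suc j)))
      = - ((B - q*q^n)^2/(s^3*q^n*((1-A)*(1-B)))) * pre q s n A B * cf q (q^n) A B j" for j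
  proof (cases "j \<le> n")
    case True
    have f: "1 - q/(q*A)*X = (A-X)/A" "1 - q/B*X = (B-q*X)/B" "1 - q/(B/q)*X = (B - q*q*X)/B" for X
      using q0 A0 B0 by (simp_all add: field_simps)
    have nzf: "A - N \<noteq> 0" "B - q \<noteq> 0" "A - q^j \<noteq> 0" "B - q*q^j \<noteq> 0" "B - q*q*q^j \<noteq> 0"
      using fA[of n] fB[of 0] fA[OF True] fB[OF True] fB'[OF True] A0 B0 unfolding f N_def by auto
    have "1 - q*q^j \<noteq> 0" using qk[of "Suc j"] by simp
    then have idp: "((1 - q/(q*A))*(1 - q/B*N)/((1 - q/(q*A)*N)*(1 - q/B)))
       * ((1 - q/(q*A)*q^j)*(1 - q/B)/((1 - q/(q*A))*(1 - q/B*q^j)))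
       * (co bn s True False A B (q^j)
          + (q*(1 - 1/N*q^j)*(1 - q*N/(A*B)*q^j)/((1 - q*q^j)*(1 - q*q^j)*(1 - q/(q*A)*q^j)*(1 - q/(B/q)*q^j)))
            * co gn s True False A B (q*q^j))
     = - ((B - q*N)^2/(s^3*N*((1-A)*(1-B))))"
      using id_pm[OF sq nz(2) A0 B0 _ N0 _ _ _ _ nzf(1,2) nzf(3) nzf(4)] nz nzf q0 by (simp add: mult.assoc)
    have ifz: "(if j = 0 then 0 else cf q (q^n) (q*A) (B/q) (j-1) * co an s True False A B (q^(j-1))) = 0"
      by (simp add: co_an_TT)
    show ?thesis unfolding ifz unfolding N_def[symmetric] unfolding cf_suc[OF True] unfolding pre_rel cf_rel[OF True] power_Suc[of q j]
      by (rule assemble2[OF idp])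
  next
    case False
    have z1: "cf q (q^n) (q*A) (B/q) (Suc j) = 0" "cf q (q^n) (q*A) (B/q) j = 0" "cf q (q^n) A B j = 0"
      using False q0 by (intro cf_zero; simp)+
    show ?thesis unfolding z1 co_an_TT by simp
  qed
  show ?thesis
    apply (subst Dop_PAB[OF sq nz q0])
    apply (unfold PAB_def)
    apply (rule finalize[OF tm])
    using q0 by (auto intro: cf_zero)
qed

lemma shape3:
  fixes a1 b1 r rd a2 b2 r' rd' a3 b3 k kd p pd m md :: complex
  assumes "b1 \<noteq> 0" "rd \<noteq> 0" "b2 \<noteq> 0" "rd' \<noteq> 0" "b3 \<noteq> 0" "kd \<noteq> 0" "pd \<noteq> 0" "md \<noteq> 0"
    and "(a1*rd*b2*rd'*b3 + r*a2*b1*rd'*b3 + r*r'*a3*b1*b2)*(kd*pd*md) = k*p*m*(b1*rd*b2*rd'*b3)"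
  shows "a1/b1 + (r/rd)*(a2/b2) + (r/rd)*(r'/rd')*(a3/b3) = (k/kd)*(p/pd)*(m/md)"
  using assms by (simp add: field_simps)

lemma shape0:
  fixes b1 a1 r rd a3 b3 k kd p pd :: complex
  assumes "b1 \<noteq> 0" "rd \<noteq> 0" "b3 \<noteq> 0" "kd \<noteq> 0" "pd \<noteq> 0"
    and "(a1*rd*b3 + r*a3*b1)*(kd*pd) = k*p*(b1*rd*b3)"
  shows "a1/b1 + (r/rd)*(a3/b3) = (k/kd)*(p/pd)"
  using assms by (simp add: field_simps)

lemma rho_mm:
  fixes s q A B N X :: complex
  assumes "q \<noteq> 0" "A \<noteq> 0" "B \<noteq> 0" "N \<noteq> 0" "1 - q*X \<noteq> 0" "A - q*q*X \<noteq> 0" "B - q*q*X \<noteq> 0"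
  shows "q*(1 - 1/N*X)*(1 - q*N/((A/q)*(B/q))*X)/((1 - q*X)*(1 - q*X)*(1 - q/(A/q)*X)*(1 - q/(B/q)*X))
     = (q*(N-X)*(A*B - q*q*q*N*X))/(N*((1-q*X)*(1-q*X))*(A-q*q*X)*(B-q*q*X))"
proof -
  have f: "1 - 1/N*X = (N - X)/N" "1 - q*N/((A/q)*(B/q))*X = (A*B - q*q*q*N*X)/(A*B)"
    "1 - q/(A/q)*X = (A - q*q*X)/A" "1 - q/(B/q)*X = (B - q*q*X)/B"
    using assms by (simp_all add: field_simps)
  show ?thesis unfolding f
    apply (simp only: times_divide_times_eq divide_divide_eq_left divide_divide_eq_right times_divide_eq_left times_divide_eq_right)
    apply (rule frac_eqI) using assms apply simp using assms apply simp by algebra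
qed

lemma mu_mm:
  fixes s q A B N X :: complex
  assumes "q \<noteq> 0" "A \<noteq> 0" "B \<noteq> 0" "N \<noteq> 0" "1 - q*X \<noteq> 0" "A - q \<noteq> 0" "B - q \<noteq> 0"
  shows "q*(1 - 1/(q*N))*(1 - q*(q*N)/(A*B))/((1 - q*X)*(1 - q*X)*(1 - q/A)*(1 - q/B))
     = ((q*N-1)*(A*B-q*q*N))/(N*((1-q*X)*(1-q*X))*(A-q)*(B-q))"
proof -
  have f: "1 - 1/(q*N) = (q*N - 1)/(q*N)" "1 - q*(q*N)/(A*B) = (A*B - q*q*N)/(A*B)"
    "1 - q/A = (A - q)/A" "1 - q/B = (B - q)/B"
    using assms by (simp_all add: field_simps)
  show ?thesis unfolding f
    apply (simp only: times_divide_times_eq divide_divide_eq_left divide_divide_eq_right times_divide_eq_left times_divide_eq_right)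
    apply (rule frac_eqI) using assms apply simp using assms apply simp by algebra
qed

lemma pi_mm:
  fixes s q A B N :: complex
  assumes "q \<noteq> 0" "A \<noteq> 0" "B \<noteq> 0" "s \<noteq> 0" "A*B - q*q*N \<noteq> 0"
  shows "-(1 - q*N)*(1 - q/A)*(1 - q/B)/(s*(1 - q*q*N/(A*B)))
     = (-((1-q*N)*(A-q)*(B-q)))/(s*(A*B-q*q*N))"
proof -
  have f: "1 - q*q*N/(A*B) = (A*B - q*q*N)/(A*B)" "1 - q/A = (A - q)/A" "1 - q/B = (B - q)/B"
    using assms by (simp_all add: field_simps)
  show ?thesis unfolding f
    apply (simp only: times_divide_times_eq divide_divide_eq_left divide_divide_eq_right times_divide_eq_left times_divide_eq_right minus_divide_left mult_minus_left)
    apply (rule frac_eqI) using assms apply simp using assms apply simp by algebra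
qed

lemma id_mm:
  fixes s q A B N P :: complex
  assumes sq: "s^2 = q" and nz: "s \<noteq> 0" "A \<noteq> 0" "B \<noteq> 0" "N \<noteq> 0" "P \<noteq> 0" "1 - A \<noteq> 0" "1 - B \<noteq> 0"
    "1 - q*P \<noteq> 0" "1 - q*(q*P) \<noteq> 0" "A - q*q*P \<noteq> 0" "B - q*q*P \<noteq> 0" "A - q*q*(q*P) \<noteq> 0" "B - q*q*(q*P) \<noteq> 0"
    "A - q \<noteq> 0" "B - q \<noteq> 0" "A*B - q*q*N \<noteq> 0"
  shows "co an s False False A B P
     + ((q*(N-P)*(A*B - q*q*q*N*P))/(N*((1-q*P)*(1-q*P))*(A-q*q*P)*(B-q*q*P))) * co bn s False False A B (q*P)
     + ((q*(N-P)*(A*B - q*q*q*N*P))/(N*((1-q*P)*(1-q*P))*(A-q*q*P)*(B-q*q*P)))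
       * ((q*(N-q*P)*(A*B - q*q*q*N*(q*P)))/(N*((1-q*(q*P))*(1-q*(q*P)))*(A-q*q*(q*P))*(B-q*q*(q*P))))
       * co gn s False False A B (q*(q*P))
   = ((A*B - q*q*N)^2/(s^5*N*((1-A)*(1-B)))) * ((-((1-q*N)*(A-q)*(B-q)))/(s*(A*B-q*q*N)))
     * (((q*N-1)*(A*B-q*q*N))/(N*((1-q*P)*(1-q*P))*(A-q)*(B-q)))"
proof -
  have q0: "q \<noteq> 0" using sq nz by auto
  show ?thesis unfolding co_def
    apply (rule shape3)
    using nz q0 apply simp
    using nz q0 apply simp
    using nz q0 apply simp
    using nz q0 apply simp
    using nz q0 apply simp
    using nz q0 apply simp
    using nz q0 apply simp
    using nz q0 apply simp
    unfolding an_def bn_def gn_def if_True if_False simp_thms sq[symmetric] by algebra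
qed

lemma id_mm0:
  fixes s q A B N :: complex
  assumes sq: "s^2 = q" and nz: "s \<noteq> 0" "A \<noteq> 0" "B \<noteq> 0" "N \<noteq> 0" "1 - A \<noteq> 0" "1 - B \<noteq> 0"
    "1 - q*1 \<noteq> 0" "A - q*q*1 \<noteq> 0" "B - q*q*1 \<noteq> 0" "A*B - q*q*N \<noteq> 0"
  shows "co bn s False False A B 1
     + ((q*(N-1)*(A*B - q*q*q*N*1))/(N*((1-q*1)*(1-q*1))*(A-q*q*1)*(B-q*q*1))) * co gn s False False A B (q*1)
   = ((A*B - q*q*N)^2/(s^5*N*((1-A)*(1-B)))) * ((-((1-q*N)*(A-q)*(B-q)))/(s*(A*B-q*q*N)))"
proof -
  have q0: "q \<noteq> 0" using sq nz by auto
  show ?thesis unfolding co_def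
    apply (rule shape0)
    using nz q0 apply simp
    using nz q0 apply simp
    using nz q0 apply simp
    using nz q0 apply simp
    using nz q0 apply simp
    unfolding an_def bn_def gn_def if_True if_False simp_thms sq[symmetric] mult_1_right power_one by algebra
qed

lemma id_mmN:
  fixes s q A B N :: complex
  assumes sq: "s^2 = q" and nz: "s \<noteq> 0" "A \<noteq> 0" "B \<noteq> 0" "N \<noteq> 0" "1 - A \<noteq> 0" "1 - B \<noteq> 0"
    "1 - q*N \<noteq> 0" "A - q \<noteq> 0" "B - q \<noteq> 0" "A*B - q*q*N \<noteq> 0"
  shows "co an s False False A B N
   = ((A*B - q*q*N)^2/(s^5*N*((1-A)*(1-B)))) * ((-((1-q*N)*(A-q)*(B-q)))/(s*(A*B-q*q*N)))
     * (((q*N-1)*(A*B-q*q*N))/(N*((1-q*N)*(1-q*N))*(A-q)*(B-q)))"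
proof -
  have q0: "q \<noteq> 0" using sq nz by auto
  show ?thesis unfolding co_def
    apply (simp only: times_divide_times_eq)
    apply (rule frac_eqI) using nz q0 apply simp using nz q0 apply simp
    unfolding an_def if_True if_False simp_thms sq[symmetric] by algebra
qed

lemma assemble0m:
  assumes "(b::complex) + r*g = K*p" shows "P*(0 + 1*b + (1*r)*g) = K*(P*p)*1"
  using assms by (simp add: algebra_simps)
lemma assemble3m:
  assumes "(a::complex) + r*b + r*r'*g = K*p*m" shows "P*(c*a + (c*r)*b + ((c*r)*r')*g) = K*(P*p)*(c*m)"
proof -
  have "P*(c*a + (c*r)*b + ((c*r)*r')*g) = P*c*(a + r*b + r*r'*g)" by (simp add: algebra_simps)
  also have "\<dots> = P*c*(K*p*m)" using assms by simp
  finally show ?thesis by (simp add: algebra_simps)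
qed
lemma assembleNm:
  assumes "(a::complex) = K*p*m" shows "P*(c*a + 0*b + 0*g) = K*(P*p)*(c*m)"
  using assms by (simp add: algebra_simps)

lemma case_mm:
  assumes sq: "s^2 = q" and nz: "x \<noteq> 0" "s \<noteq> 0" "1-x^2 \<noteq> 0" "1-s*x \<noteq> 0" "x-s \<noteq> 0" "A \<noteq> 1" "B \<noteq> 1"
    and q0: "q \<noteq> 0" and A0: "A \<noteq> 0" and B0: "B \<noteq> 0"
    and qk: "\<And>k. 0 < k \<Longrightarrow> q^k \<noteq> 1"
    and hA': "\<And>m. m \<le> Suc n \<Longrightarrow> qpoch q (q/(A/q)) m \<noteq> 0"
    and hB': "\<And>m. m \<le> Suc n \<Longrightarrow> qpoch q (q/(B/q)) m \<noteq> 0"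
    and hA: "\<And>m. m \<le> Suc n \<Longrightarrow> qpoch q (q/A) m \<noteq> 0"
    and hB: "\<And>m. m \<le> Suc n \<Longrightarrow> qpoch q (q/B) m \<noteq> 0"
    and hZ: "qpoch q (q^(n+2)/(A*B)) (Suc n) \<noteq> 0"
  shows "Dop q s False False A B (\<lambda>z. PAB q s n z (A/q) (B/q)) x
      = ((A*B - q*q*q^n)^2/(s^5*q^n*((1-A)*(1-B)))) * PAB q s (Suc n) x A B"
proof -
  define N where "N = q^n"
  have N0: "N \<noteq> 0" using q0 by (simp add: N_def)
  have hq: "qpoch q q m \<noteq> 0" for m
  proof -
    have "1 - q*q^i \<noteq> 0" for i using qk[of "Suc i"] by simp
    then show ?thesis by (induction m) (auto simp: qpoch_Suc)
  qed
  have oq: "1 - q*X \<noteq> 0" if "X = q^k" for X k using qk[of "Suc k"] that by simp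
  have fA: "A - q*q*q^k \<noteq> 0" if "k \<le> n" for k
  proof -
    have "1 - q/(A/q)*q^k \<noteq> 0" using qpoch_nz_fac[OF hA'[of "Suc n"]] that by simp
    moreover have "1 - q/(A/q)*q^k = (A - q*q*q^k)/A" using A0 q0 by (simp add: field_simps)
    ultimately show ?thesis using A0 by simp
  qed
  have fB: "B - q*q*q^k \<noteq> 0" if "k \<le> n" for k
  proof -
    have "1 - q/(B/q)*q^k \<noteq> 0" using qpoch_nz_fac[OF hB'[of "Suc n"]] that by simp
    moreover have "1 - q/(B/q)*q^k = (B - q*q*q^k)/B" using B0 q0 by (simp add: field_simps)
    ultimately show ?thesis using B0 by simp
  qed
  have gA: "A - q \<noteq> 0"
  proof -
    have "1 - q/A*q^0 \<noteq> 0" using qpoch_nz_fac[OF hA[OF order_refl] zero_less_Suc] .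
    then show ?thesis using A0 by (auto simp: field_simps)
  qed
  have gB: "B - q \<noteq> 0"
  proof -
    have "1 - q/B*q^0 \<noteq> 0" using qpoch_nz_fac[OF hB[OF order_refl] zero_less_Suc] .
    then show ?thesis using B0 by (auto simp: field_simps)
  qed
  have Zf: "A*B - q*q*N \<noteq> 0"
  proof -
    have "qpoch q (q^(n+2)/(A*B)) (Suc n) = (1 - q^(n+2)/(A*B)) * qpoch q (q*(q^(n+2)/(A*B))) n"
      by (rule qpoch_Suc_left) simp
    then have "1 - q^(n+2)/(A*B) \<noteq> 0" using hZ by auto
    moreover have "1 - q^(n+2)/(A*B) = (A*B - q*q*N)/(A*B)" using A0 B0 by (simp add: field_simps N_def)
    ultimately show ?thesis using A0 B0 by (simp add: N_def mult.assoc)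
  qed
  have cf_suc: "cf q N (A/q) (B/q) (Suc k) = cf q N (A/q) (B/q) k *
      (q*(1 - 1/N*q^k)*(1 - q*N/((A/q)*(B/q))*q^k)/((1 - q*q^k)*(1 - q*q^k)*(1 - q/(A/q)*q^k)*(1 - q/(B/q)*q^k)))"
    if "k \<le> n" for k
    using cf_Suc_gen[OF hq hA'[of "Suc k"] hB'[of "Suc k"], where N=N] that by simp
  have rho: "q*(1 - 1/N*q^k)*(1 - q*N/((A/q)*(B/q))*q^k)/((1 - q*q^k)*(1 - q*q^k)*(1 - q/(A/q)*q^k)*(1 - q/(B/q)*q^k))
     = (q*(N-q^k)*(A*B - q*q*q*N*q^k))/(N*((1-q*q^k)*(1-q*q^k))*(A-q*q*q^k)*(B-q*q*q^k))"
    if "k \<le> n" for k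
    by (rule rho_mm[OF q0 A0 B0 N0 oq[OF refl] fA[OF that] fB[OF that]])
  have dsh: "cf q (q^(Suc n)) A B (Suc i) = cf q N (A/q) (B/q) i *
      (((q*N-1)*(A*B-q*q*N))/(N*((1-q*q^i)*(1-q*q^i))*(A-q)*(B-q)))"
    if "i \<le> n" for i
  proof -
    have "cf q (q^(Suc n)) A B (Suc i) = cf q (q^n) (A/q) (B/q) i *
      (q*(1 - 1/q^(Suc n))*(1 - q*q^(Suc n)/(A*B))/((1 - q*q^i)*(1 - q*q^i)*(1 - q/A)*(1 - q/B)))"
      by (rule cf_shift_gen) (use hq hA[of "Suc i"] hB[of "Suc i"] that q0 in \<open>simp_all add: field_simps\<close>)
    also have "q*(1 - 1/q^(Suc n))*(1 - q*q^(Suc n)/(A*B))/((1 - q*q^i)*(1 - q*q^i)*(1 - q/A)*(1 - q/B))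
       = ((q*N-1)*(A*B-q*q*N))/(N*((1-q*q^i)*(1-q*q^i))*(A-q)*(B-q))"
      unfolding power_Suc[of q n] N_def[symmetric] by (rule mu_mm[OF q0 A0 B0 N0 oq[OF refl] gA gB])
    finally show ?thesis unfolding N_def .
  qed
  have pre_rel: "pre q s (Suc n) A B = pre q s n (A/q) (B/q) * ((-((1-q*N)*(A-q)*(B-q)))/(s*(A*B-q*q*N)))"
  proof -
    have e: "pre q s (Suc n) A B = pre q s n (A/q) (B/q) * (-(1 - q^(Suc n))*(1 - q/A)*(1 - q/B)/(s*(1 - q^(n+2)/(A*B))))"
      by (rule pre_shift_gen) (use q0 A0 B0 hZ nz(2) in \<open>simp_all add: field_simps\<close>)
    have e2: "q^(Suc n) = q*N" "q^(n+2) = q*q*N" by (simp_all add: N_def)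
    show ?thesis unfolding e e2 pi_mm[OF q0 A0 B0 nz(2) Zf] ..
  qed
  have K: "(A*B - q*q*q^n)^2/(s^5*q^n*((1-A)*(1-B))) = (A*B - q*q*N)^2/(s^5*N*((1-A)*(1-B)))"
    by (simp add: N_def)
  have d1: "1 - A \<noteq> 0" "1 - B \<noteq> 0" using nz by auto
  have tm: "pre q s n (A/q) (B/q) *
      ((if j = 0 then 0 else cf q (q^n) (A/q) (B/q) (j-1) * co an s False False A B (q^(j-1)))
         + cf q (q^n) (A/q) (B/q) j * co bn s False False A B (q^j)
         + cf q (q^n) (A/q) (B/q) (Suc j) * co gn s False False A B (q^(Suc j)))
      = ((A*B - q*q*q^n)^2/(s^5*q^n*((1-A)*(1-B)))) * pre q s (Suc n) A B * cf q (q^(Suc n)) A B j" for j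
  proof -
    consider "j = 0" | i where "j = Suc i" "i < n" | "j = Suc n" | "j > Suc n"
      by (metis less_Suc_eq not0_implies_Suc not_less_eq)
    then show ?thesis
    proof cases
      case 1
      have o1: "1 - q*1 \<noteq> 0" using oq[of 1 0] by simp
      have aa: "A - q*q*1 \<noteq> 0" "B - q*q*1 \<noteq> 0" using fA[of 0] fB[of 0] by simp_all
      have idm: "co bn s False False A B 1
         + ((q*(N-1)*(A*B - q*q*q*N*1))/(N*((1-q*1)*(1-q*1))*(A-q*q*1)*(B-q*q*1))) * co gn s False False A B (q*1)
         = ((A*B - q*q*N)^2/(s^5*N*((1-A)*(1-B)))) * ((-((1-q*N)*(A-q)*(B-q)))/(s*(A*B-q*q*N)))"
        by (rule id_mm0[OF sq nz(2) A0 B0 N0 d1 o1 aa Zf])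
      have if0: "(if (0::nat) = 0 then 0 else X) = (0::complex)" for X by simp
      show ?thesis unfolding 1 K
        unfolding if0 N_def[symmetric]
        unfolding cf_suc[of 0, OF le0]
        unfolding rho[of 0, OF le0]
        unfolding cf_0 pre_rel
        unfolding power_Suc[of q 0] power_0
        by (rule assemble0m[OF idm])
    next
      case 2
      have il: "i \<le> n" "Suc i \<le> n" using 2 by auto
      have o1: "1 - q*q^i \<noteq> 0" "1 - q*(q*q^i) \<noteq> 0" using oq[of "q^i" i] oq[of "q^(Suc i)" "Suc i"] by simp_all
      have P0: "q^i \<noteq> 0" using q0 by simp
      have aa: "A - q*q*q^i \<noteq> 0" "B - q*q*q^i \<noteq> 0" "A - q*q*(q*q^i) \<noteq> 0" "B - q*q*(q*q^i) \<noteq> 0"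
        using fA[OF il(1)] fB[OF il(1)] fA[OF il(2)] fB[OF il(2)] by simp_all
      have idm: "co an s False False A B (q^i)
     + ((q*(N-q^i)*(A*B - q*q*q*N*q^i))/(N*((1-q*q^i)*(1-q*q^i))*(A-q*q*q^i)*(B-q*q*q^i))) * co bn s False False A B (q*q^i)
     + ((q*(N-q^i)*(A*B - q*q*q*N*q^i))/(N*((1-q*q^i)*(1-q*q^i))*(A-q*q*q^i)*(B-q*q*q^i)))
       * ((q*(N-q*q^i)*(A*B - q*q*q*N*(q*q^i)))/(N*((1-q*(q*q^i))*(1-q*(q*q^i)))*(A-q*q*(q*q^i))*(B-q*q*(q*q^i))))
       * co gn s False False A B (q*(q*q^i))
   = ((A*B - q*q*N)^2/(s^5*N*((1-A)*(1-B)))) * ((-((1-q*N)*(A-q)*(B-q)))/(s*(A*B-q*q*N)))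
     * (((q*N-1)*(A*B-q*q*N))/(N*((1-q*q^i)*(1-q*q^i))*(A-q)*(B-q)))"
        by (rule id_mm[OF sq nz(2) A0 B0 N0 P0 d1 o1 aa gA gB Zf])
      have ifS: "(if Suc i = 0 then X else Y) = Y" for X Y :: complex by simp
      show ?thesis unfolding 2(1) K
        unfolding ifS diff_Suc_1 N_def[symmetric]
        unfolding cf_suc[OF il(2)] unfolding cf_suc[OF il(1)] dsh[OF il(1)]
        unfolding rho[OF il(1)] rho[OF il(2)] pre_rel
        unfolding power_Suc[of q "Suc i"] unfolding power_Suc[of q i]
        by (rule assemble3m[OF idm])
    next
      case 3
      have o1: "1 - q*N \<noteq> 0" using oq[of N n] N_def by simp
      have idm: "co an s False False A B N
   = ((A*B - q*q*N)^2/(s^5*N*((1-A)*(1-B)))) * ((-((1-q*N)*(A-q)*(B-q)))/(s*(A*B-q*q*N)))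
     * (((q*N-1)*(A*B-q*q*N))/(N*((1-q*N)*(1-q*N))*(A-q)*(B-q)))"
        by (rule id_mmN[OF sq nz(2) A0 B0 N0 d1 o1 gA gB Zf])
      have z: "cf q N (A/q) (B/q) (Suc n) = 0" "cf q N (A/q) (B/q) (Suc (Suc n)) = 0"
        unfolding N_def using q0 by (intro cf_zero; simp)+
      have ifS: "(if Suc n = 0 then X else Y) = Y" for X Y :: complex by simp
      show ?thesis unfolding 3 K
        unfolding ifS diff_Suc_1 N_def[symmetric]
        unfolding z dsh[OF order_refl] pre_rel
        unfolding N_def[symmetric]
        by (rule assembleNm[OF idm])
    next
      case 4
      have z: "cf q (q^n) (A/q) (B/q) (j-1) = 0" "cf q (q^n) (A/q) (B/q) j = 0"
        "cf q (q^n) (A/q) (B/q) (Suc j) = 0" "cf q (q^(Suc n)) A B j = 0"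
        using 4 q0 by (intro cf_zero; simp)+
      show ?thesis unfolding z by simp
    qed
  qed
  show ?thesis
    apply (subst Dop_PAB[OF sq nz q0])
    apply (unfold PAB_def)
    apply (rule finalize[OF tm])
     apply simp
    apply (rule cf_zero)
    using q0 by auto
qed

lemma Dop_sym: "Dop q s a b A B f x = Dop q s b a B A f x"
  unfolding Dop_def by (simp add: mult_ac)

lemma PAB_sym: "PAB q s n z A B = PAB q s n z B A"
  unfolding PAB_def pre_def cf_def by (simp add: mult_ac)

lemma case_mp:
  assumes sq: "s^2 = q" and nz: "x \<noteq> 0" "s \<noteq> 0" "1-x^2 \<noteq> 0" "1-s*x \<noteq> 0" "x-s \<noteq> 0" "A \<noteq> 1" "B \<noteq> 1"
    and q0: "q \<noteq> 0" and A0: "A \<noteq> 0" and B0: "B \<noteq> 0"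
    and qk: "\<And>k. 0 < k \<Longrightarrow> q^k \<noteq> 1"
    and hB': "\<And>m. m \<le> Suc n \<Longrightarrow> qpoch q (q/(q*B)) m \<noteq> 0"
    and hA': "\<And>m. m \<le> Suc n \<Longrightarrow> qpoch q (q/(A/q)) m \<noteq> 0"
    and hA: "\<And>m. m \<le> Suc n \<Longrightarrow> qpoch q (q/A) m \<noteq> 0"
    and hB: "\<And>m. m \<le> Suc n \<Longrightarrow> qpoch q (q/B) m \<noteq> 0"
  shows "Dop q s False True A B (\<lambda>z. PAB q s n z (A/q) (q*B)) x
      = - ((A - q*q^n)^2/(s^3*q^n*((1-A)*(1-B)))) * PAB q s n x A B"
proof -
  have "Dop q s False True A B (\<lambda>z. PAB q s n z (A/q) (q*B)) x = Dop q s True False B A (\<lambda>z. PAB q s n z (q*B) (A/q)) x"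
    by (subst Dop_sym) (simp add: PAB_sym[of q s n _ "A/q"])
  also have "\<dots> = - ((A - q*q^n)^2/(s^3*q^n*((1-B)*(1-A)))) * PAB q s n x B A"
    by (rule case_pm[OF sq nz(1-5) nz(7) nz(6) q0 B0 A0 qk hB' hA' hB hA])
  finally show ?thesis by (simp add: PAB_sym[of q s n x B A] mult.commute)
qed

lemma final_alg:
  fixes n1 n2 n3 n4 m0 m1 m2 P0 P1 P2 s N A B d1 d2 q :: complex
  assumes "m0 \<noteq> 0" "m1 \<noteq> 0" "m2 \<noteq> 0" "d1 \<noteq> 0" "d2 \<noteq> 0" "s \<noteq> 0" "N \<noteq> 0"
  shows "n1*((1-N)^2/(s*N*(d1*d2))*P0) + n2*(-((B - q*N)^2/(s^3*N*(d1*d2)))*P1)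
       + n3*(-((A-q*N)^2/(s^3*N*(d1*d2)))*P1) + n4*((A*B-q*q*N)^2/(s^5*N*(d1*d2))*P2)
     = 1/(d1*d2) * (n4/m2 * (1/(s^5*N)) * (A*B - q*q*N)^2 * (m2*P2)
        - (1/(s^3*N))*(n2/m1*(B-q*N)^2 + n3/m1*(A - q*N)^2)*(m1*P1)
        + n1/m0*(1/(s*N))*(1-N)^2*(m0*P0))"
  using assms by (simp add: field_simps)

theorem mainTheorem5:
  fixes q r :: complex and nu :: "nat \<Rightarrow> complex \<Rightarrow> complex \<Rightarrow> complex"
    and n :: nat and x x0 x1 :: complex
  assumes "0 < norm q" and "norm q < 1" and "r ^ 4 = q"
    and "\<And>m a b. nu m a b \<noteq> 0"
    and "n \<ge> 1"
    and "generic_point q r n x x0 x1"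
  shows "A6 r (Pbar nu q r n) x x0 x1 =
    1 / ((1 - x0^2) * (1 - x1^2)) *
    ( nu n (x0 / r^2) (x1 / r^2) / nu (n+1) x0 x1 * (1 / (r^2) ^ (2*n+5))
        * (x0^2 * x1^2 - q^(n+2))^2 * Pbar nu q r (n+1) x x0 x1
    - (1 / (r^2) ^ (2*n+3))
        * (nu n (r^2 * x0) (x1 / r^2) / nu n x0 x1 * (x1^2 - q^(n+1))^2
           + nu n (x0 / r^2) (r^2 * x1) / nu n x0 x1 * (x0^2 - q^(n+1))^2)
        * Pbar nu q r n x x0 x1
    + nu n (r^2 * x0) (r^2 * x1) / nu (n-1) x0 x1 * (1 / (r^2) ^ (2*n+1))
        * (1 - q^n)^2 * Pbar nu q r (n-1) x x0 x1 )"

proof -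
  note gp = assms(6)[unfolded generic_point_def]
  have q0: "q \<noteq> 0" using assms(1) by auto
  have r0: "r \<noteq> 0" using assms(3) q0 by auto
  define s where "s = r^2"
  have sq: "s^2 = q" unfolding s_def using assms(3) by (simp add: power_mult[symmetric])
  have s0: "s \<noteq> 0" using r0 by (simp add: s_def)
  have x0: "x \<noteq> 0" and x00: "x0 \<noteq> 0" and x10: "x1 \<noteq> 0" using gp by auto
  have xx: "1 - x^2 \<noteq> 0" using gp by auto
  have xs1: "1 - s*x \<noteq> 0" using gp by (simp add: s_def)
  have xs2: "x - s \<noteq> 0"
  proof
    assume "x - s = 0"
    then have "1 - r^2/x = 0" using x0 by (simp add: s_def field_simps)
    moreover have "1 - r^2/x \<noteq> 0" using gp by blast
    ultimately show False by contradiction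
  qed
  define A where "A = x0^2"
  define B where "B = x1^2"
  have A1: "A \<noteq> 1" and B1: "B \<noteq> 1" using gp by (auto simp: A_def B_def)
  have A0: "A \<noteq> 0" and B0: "B \<noteq> 0" using x00 x10 by (auto simp: A_def B_def)
  have qk: "q^k \<noteq> 1" if "0 < k" for k
  proof
    assume "q^k = 1"
    then have "norm q ^ k = 1" by (metis norm_one norm_power)
    moreover have "norm q ^ k < 1" using assms(1,2) that by (simp add: power_less_one_iff)
    ultimately show False by simp
  qed
  have GP: "qpoch q (q^(m+1)/((a*x0)^2*(b*x1)^2)) m \<noteq> 0 \<and> qpoch q (q/(a*x0)^2) m \<noteq> 0 \<and> qpoch q (q/(b*x1)^2) m \<noteq> 0"
    if "a \<in> {1/r^2, 1, r^2}" "b \<in> {1/r^2, 1, r^2}" "m \<le> n+1" for a b m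
    using gp that by blast
  have sqA: "(r^2*x0)^2 = q*A" "(x0/r^2)^2 = A/q" "(r^2*x1)^2 = q*B" "(x1/r^2)^2 = B/q"
    using assms(3) by (simp_all add: A_def B_def power_mult_distrib power_divide power_mult[symmetric])
  have sqA': "((1/r^2)*x0)^2 = A/q" "((1/r^2)*x1)^2 = B/q" "(1*x0)^2 = A" "(1*x1)^2 = B"
    using assms(3) by (simp_all add: A_def B_def power_mult_distrib power_divide power_mult[symmetric])
  have hA: "qpoch q (q/A) m \<noteq> 0" "qpoch q (q/B) m \<noteq> 0" if "m \<le> Suc n" for m
    using GP[of 1 1 m] that unfolding sqA' by auto
  have hAq: "qpoch q (q/(q*A)) m \<noteq> 0" "qpoch q (q/(q*B)) m \<noteq> 0" if "m \<le> Suc n" for m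
    using GP[of "r^2" "r^2" m] that unfolding sqA by auto
  have hAd: "qpoch q (q/(A/q)) m \<noteq> 0" "qpoch q (q/(B/q)) m \<noteq> 0" if "m \<le> Suc n" for m
    using GP[of "1/r^2" "1/r^2" m] that unfolding sqA' by auto
  have hZmm: "qpoch q (q^(n+2)/(A*B)) (Suc n) \<noteq> 0"
    using GP[of 1 1 "n+1"] unfolding sqA' by (simp add: numeral_2_eq_2)
  obtain n' where n': "n = Suc n'" using assms(5) by (cases n) auto
  have hZpp: "qpoch q (q^(Suc n' + 1)/((q*A)*(q*B))) (Suc n') \<noteq> 0"
    using GP[of "r^2" "r^2" n] unfolding sqA n' by simp
  note nzx = sq x0 s0 xx xs1 xs2 A1 B1
  have Pb: "Pbar nu q r m z X Y = nu m X Y * PAB q s m z (X^2) (Y^2)" for m z X Y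
    unfolding Pbar_def Pn_PAB s_def ..
  have lhs: "A6 r (Pbar nu q r n) x x0 x1 =
      nu n (r^2*x0) (r^2*x1) * ((1-q^n)^2/(s*q^n*((1-A)*(1-B))) * PAB q s (n-1) x A B)
    + nu n (r^2*x0) (x1/r^2) * (- ((B - q*q^n)^2/(s^3*q^n*((1-A)*(1-B)))) * PAB q s n x A B)
    + nu n (x0/r^2) (r^2*x1) * (- ((A - q*q^n)^2/(s^3*q^n*((1-A)*(1-B)))) * PAB q s n x A B)
    + nu n (x0/r^2) (x1/r^2) * (((A*B - q*q*q^n)^2/(s^5*q^n*((1-A)*(1-B)))) * PAB q s (Suc n) x A B)"
  proof -
    have c1: "Dop q s True True A B (\<lambda>z. PAB q s n z (q*A) (q*B)) x = (1-q^n)^2/(s*q^n*((1-A)*(1-B))) * PAB q s (n-1) x A B"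
      unfolding n' diff_Suc_1
      by (rule case_pp[OF nzx q0 A0 B0 qk hAq(1) hAq(2) hZpp]) (simp_all add: n')
    have c2: "Dop q s True False A B (\<lambda>z. PAB q s n z (q*A) (B/q)) x = - ((B - q*q^n)^2/(s^3*q^n*((1-A)*(1-B)))) * PAB q s n x A B"
      by (rule case_pm[OF nzx q0 A0 B0 qk hAq(1) hAd(2) hA(1) hA(2)])
    have c3: "Dop q s False True A B (\<lambda>z. PAB q s n z (A/q) (q*B)) x = - ((A - q*q^n)^2/(s^3*q^n*((1-A)*(1-B)))) * PAB q s n x A B"
      by (rule case_mp[OF nzx q0 A0 B0 qk hAq(2) hAd(1) hA(1) hA(2)])
    have c4: "Dop q s False False A B (\<lambda>z. PAB q s n z (A/q) (B/q)) x = ((A*B - q*q*q^n)^2/(s^5*q^n*((1-A)*(1-B)))) * PAB q s (Suc n) x A B"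
      by (rule case_mm[OF nzx q0 A0 B0 qk hAd(1) hAd(2) hA(1) hA(2) hZmm])
    show ?thesis
      unfolding A6_expand[OF assms(3)] s_def[symmetric] Pb sh_def if_True if_False Dop_cmult
      unfolding s_def sqA A_def[symmetric] B_def[symmetric] unfolding s_def[symmetric]
      unfolding c1 c2 c3 c4 ..
  qed
  have pw: "(r^2)^(2*n+5) = s^5*q^n" "(r^2)^(2*n+3) = s^3*q^n" "(r^2)^(2*n+1) = s*q^n"
    unfolding s_def[symmetric] sq[symmetric] by (simp_all add: power_add power_mult)
  have qq: "q^(n+2) = q*q*q^n" "q^(n+1) = q*q^n" by (simp_all add: numeral_2_eq_2)
  have n1: "n + 1 = Suc n" by simp
  show ?thesis
    unfolding lhs Pb pw qq A_def[symmetric] B_def[symmetric]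
    unfolding n1 s_def[symmetric]
    by (rule final_alg) (use assms(4) s0 q0 A1 B1 in auto)
qed


end
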